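(* 1) Consider a strategy $\sigma=(\nu,\lambda)$ such that $\lambda_t^n>0$ for all $t\ge 0$ and $n=1,\dots,N$. Then $\sigma$ is survival if \[ \sum_{t=0}^\infty \|\lambda_t-\mu_t\|^2<\infty \quad \text{a.s.} \] Moreover, for a strategy $\sigma$ such that $\lambda_t^n>0$ and $\nu_t$ is bounded away from zero, this condition is also necessary for survival. 2) Suppose that in a strategy profile, some agent uses a survival strategy $\sigma=(\nu,\lambda)$ such that its components $\lambda_t^n$ and $\nu_t$ are bounded away from zero. Then \[ \sum_{t=0}^\infty \|\bar\lambda_t-\mu_t\|^2<\infty \quad \text{a.s.} \]
   Context: A probability space carries a discrete-time filtration $(\mathcal{F}_t)_{t\ge0}$ and an adapted sequence of random vectors $X_t=(X_t^1,\dots,X_t^N)$, $t\ge1$, with values in the simplex $\Delta^N=\{x\in\mathbb{R}_+^N: x^1+\dots+x^N=1\}$. There is a constant $\epsilon>0$ such that $\mathrm{E}(X_{t+1}^n\mid\mathcal{F}_t)\ge\epsilon$ for all $t\ge0$, $n=1,\dots,N$. Let $\mu_t^n=\mathrm{E}(X_{t+1}^n\mid\mathcal{F}_t)$ and $\mu_t=(\mu_t^1,\dots,\mu_t^N)$. $M$ agents have strictly positive non-random initial wealth $W_0^m$ (normalized so the total wealth is $1$). A strategy of an agent is a pair $\sigma=(\nu,\lambda)$ where $\nu_t\in[0,1]$ and $\lambda_t\in\Delta^N$ are $\mathcal{F}_t$-measurable ($\nu_t$ is the fraction of wealth bet at time $t$, $\lambda_t^n$ the fraction of the bet placed on the $n$-th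 component of $X_{t+1}$). Wealth evolves by \[ W_{t+1}^m=\sum_{k=1}^M \nu_t^kW_t^k\cdot\sum_{n=1}^N\frac{\nu_t^m\lambda_t^{mn}W_t^m}{\sum_{k=1}^M\nu_t^k\lambda_t^{kn}W_t^k}X_{t+1}^n+(1-\nu_t^m)W_t^m, \] and it is assumed throughout that in every strategy profile some agent has $\nu_t^m>0$ and $\lambda_t^{mn}>0$ for all $t,n$, so the denominators are positive and total wealth stays equal to $1$. The market forecast (wealth-weighted strategy) is $\bar\nu_t=\sum_m\nu_t^mW_t^m$, $\bar\lambda_t^n=\frac{1}{\bar\nu_t}\sum_m\nu_t^m\lambda_t^{mn}W_t^m$. A strategy is called survival if for any strategy profile containing it (used by agent $m$) and any initial wealth vector, $\liminf_{t\to\infty}W_t^m>0$ a.s. $\|\cdot\|$ denotes the Euclidean norm (pathwise for random vectors). *)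

theory Defs
  imports "HOL-Probability.Probability"
begin

text \<open>Components are indexed by n < N (0-based), agents by m < Ma (0-based).\<close>

definition prob_simplex :: "nat \<Rightarrow> (nat \<Rightarrow> real) set" where
  "prob_simplex N = {x. (\<forall>n<N. 0 \<le> x n) \<and> (\<Sum>n<N. x n) = 1}"

definition filtration_on :: "'w measure \<Rightarrow> (nat \<Rightarrow> 'w measure) \<Rightarrow> bool" where
  "filtration_on M F \<longleftrightarrow> (\<forall>t. subalgebra M (F t)) \<and> (\<forall>s t. s \<le> t \<longrightarrow> sets (F s) \<subseteq> sets (F t))"

definition mu :: "'w measure \<Rightarrow> (nat \<Rightarrow> 'w measure) \<Rightarrow> (nat \<Rightarrow> 'w \<Rightarrow> nat \<Rightarrow> real)
    \<Rightarrow> nat \<Rightarrow> 'w \<Rightarrow> nat \<Rightarrow> real" where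
  "mu M F X t w n = real_cond_exp M (F t) (\<lambda>v. X (Suc t) v n) w"

definition is_strategy :: "'w measure \<Rightarrow> (nat \<Rightarrow> 'w measure) \<Rightarrow> nat
    \<Rightarrow> (nat \<Rightarrow> 'w \<Rightarrow> real) \<Rightarrow> (nat \<Rightarrow> 'w \<Rightarrow> nat \<Rightarrow> real) \<Rightarrow> bool" where
  "is_strategy M F N nu lam \<longleftrightarrow>
     (\<forall>t. nu t \<in> borel_measurable (F t) \<and> (\<forall>n<N. (\<lambda>w. lam t w n) \<in> borel_measurable (F t))
        \<and> (\<forall>w\<in>space M. 0 \<le> nu t w \<and> nu t w \<le> 1 \<and> lam t w \<in> prob_simplex N))"

definition admissible_profile :: "'w measure \<Rightarrow> (nat \<Rightarrow> 'w measure) \<Rightarrow> nat \<Rightarrow> nat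
    \<Rightarrow> (nat \<Rightarrow> nat \<Rightarrow> 'w \<Rightarrow> real) \<Rightarrow> (nat \<Rightarrow> nat \<Rightarrow> 'w \<Rightarrow> nat \<Rightarrow> real) \<Rightarrow> bool" where
  "admissible_profile M F N Ma nus lams \<longleftrightarrow>
     (\<forall>m<Ma. is_strategy M F N (nus m) (lams m)) \<and>
     (\<exists>m<Ma. \<forall>t. \<forall>w\<in>space M. 0 < nus m t w \<and> (\<forall>n<N. 0 < lams m t w n))"

primrec wealth :: "nat \<Rightarrow> nat \<Rightarrow> (nat \<Rightarrow> 'w \<Rightarrow> nat \<Rightarrow> real)
    \<Rightarrow> (nat \<Rightarrow> nat \<Rightarrow> 'w \<Rightarrow> real) \<Rightarrow> (nat \<Rightarrow> nat \<Rightarrow> 'w \<Rightarrow> nat \<Rightarrow> real) \<Rightarrow> (nat \<Rightarrow> real)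
    \<Rightarrow> nat \<Rightarrow> 'w \<Rightarrow> nat \<Rightarrow> real" where
  "wealth N Ma X nus lams W0 0 w m = W0 m"
| "wealth N Ma X nus lams W0 (Suc t) w m =
     (\<Sum>k<Ma. nus k t w * wealth N Ma X nus lams W0 t w k) *
       (\<Sum>n<N. (nus m t w * lams m t w n * wealth N Ma X nus lams W0 t w m) /
               (\<Sum>k<Ma. nus k t w * lams k t w n * wealth N Ma X nus lams W0 t w k) * X (Suc t) w n)
     + (1 - nus m t w) * wealth N Ma X nus lams W0 t w m"

definition nu_bar :: "nat \<Rightarrow> nat \<Rightarrow> (nat \<Rightarrow> 'w \<Rightarrow> nat \<Rightarrow> real)
    \<Rightarrow> (nat \<Rightarrow> nat \<Rightarrow> 'w \<Rightarrow> real) \<Rightarrow> (nat \<Rightarrow> nat \<Rightarrow> 'w \<Rightarrow> nat \<Rightarrow> real) \<Rightarrow> (nat \<Rightarrow> real)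
    \<Rightarrow> nat \<Rightarrow> 'w \<Rightarrow> real" where
  "nu_bar N Ma X nus lams W0 t w = (\<Sum>m<Ma. nus m t w * wealth N Ma X nus lams W0 t w m)"

definition lam_bar :: "nat \<Rightarrow> nat \<Rightarrow> (nat \<Rightarrow> 'w \<Rightarrow> nat \<Rightarrow> real)
    \<Rightarrow> (nat \<Rightarrow> nat \<Rightarrow> 'w \<Rightarrow> real) \<Rightarrow> (nat \<Rightarrow> nat \<Rightarrow> 'w \<Rightarrow> nat \<Rightarrow> real) \<Rightarrow> (nat \<Rightarrow> real)
    \<Rightarrow> nat \<Rightarrow> 'w \<Rightarrow> nat \<Rightarrow> real" where
  "lam_bar N Ma X nus lams W0 t w n =
     (\<Sum>m<Ma. nus m t w * lams m t w n * wealth N Ma X nus lams W0 t w m) / nu_bar N Ma X nus lams W0 t w"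

definition survival :: "'w measure \<Rightarrow> (nat \<Rightarrow> 'w measure) \<Rightarrow> nat \<Rightarrow> (nat \<Rightarrow> 'w \<Rightarrow> nat \<Rightarrow> real)
    \<Rightarrow> (nat \<Rightarrow> 'w \<Rightarrow> real) \<Rightarrow> (nat \<Rightarrow> 'w \<Rightarrow> nat \<Rightarrow> real) \<Rightarrow> bool" where
  "survival M F N X nu lam \<longleftrightarrow>
     (\<forall>Ma m nus lams W0. m < Ma \<and> admissible_profile M F N Ma nus lams \<and>
        nus m = nu \<and> lams m = lam \<and> (\<forall>k<Ma. 0 < W0 k) \<and> (\<Sum>k<Ma. W0 k) = 1 \<longrightarrow>
        (AE w in M. 0 < liminf (\<lambda>t. ereal (wealth N Ma X nus lams W0 t w m))))"

end

theory Submission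
  imports Defs
begin


locale mkt =
  fixes M :: "'w measure" and F :: "nat \<Rightarrow> 'w measure"
    and X :: "nat \<Rightarrow> 'w \<Rightarrow> nat \<Rightarrow> real" and N :: nat and eps :: real
  assumes ps: "prob_space M"
    and filt: "filtration_on M F"
    and Xmeas: "\<forall>t\<ge>1. \<forall>n<N. (\<lambda>w. X t w n) \<in> borel_measurable (F t)"
    and Xsimp: "\<forall>t\<ge>1. \<forall>w\<in>space M. X t w \<in> prob_simplex N"
    and eps_pos: "eps > 0"
    and mu_ge: "\<forall>t. \<forall>n<N. AE w in M. eps \<le> mu M F X t w n"
begin

interpretation P: prob_space M by (rule ps)

lemma subalg: "subalgebra M (F t)"
  using filt unfolding filtration_on_def by auto

lemma space_F [simp]: "space (F t) = space M"
  using subalg unfolding subalgebra_def by auto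

lemma sets_F_sub: "s \<le> t \<Longrightarrow> sets (F s) \<subseteq> sets (F t)"
  using filt unfolding filtration_on_def by auto

lemma sets_F_M: "A \<in> sets (F t) \<Longrightarrow> A \<in> sets M"
  using subalg unfolding subalgebra_def by auto

lemma meas_mono: "s \<le> t \<Longrightarrow> f \<in> borel_measurable (F s) \<Longrightarrow> f \<in> borel_measurable (F t)"
  apply (rule measurable_from_subalg[of "F t" "F s"])
  using sets_F_sub[of s t] by (auto simp: subalgebra_def)

lemma meas_M: "f \<in> borel_measurable (F t) \<Longrightarrow> f \<in> borel_measurable M"
  by (rule measurable_from_subalg[OF subalg])

lemma meas_Suc: "f \<in> borel_measurable (F t) \<Longrightarrow> f \<in> borel_measurable (F (Suc t))"
  by (rule meas_mono) auto

lemma sfs: "sigma_finite_subalgebra M (F t)"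
  apply (rule finite_measure_subalgebra_is_sigma_finite)
  unfolding finite_measure_subalgebra_def finite_measure_subalgebra_axioms_def
  using subalg P.finite_measure_axioms by auto

lemma N_pos: "N > 0"
proof -
  obtain w where "w \<in> space M" using P.not_empty by blast
  then have "X 1 w \<in> prob_simplex N" using Xsimp by auto
  then show ?thesis unfolding prob_simplex_def by (cases N) auto
qed

lemma X_simp: "w \<in> space M \<Longrightarrow> X (Suc t) w \<in> prob_simplex N"
  using Xsimp by auto

lemma X_nonneg: "w \<in> space M \<Longrightarrow> n < N \<Longrightarrow> 0 \<le> X (Suc t) w n"
  using X_simp unfolding prob_simplex_def by auto

lemma X_sum: "w \<in> space M \<Longrightarrow> (\<Sum>n<N. X (Suc t) w n) = 1"
  using X_simp unfolding prob_simplex_def by auto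

lemma simplex_le1: assumes "x \<in> prob_simplex N" "n < N" shows "x n \<le> 1"
proof -
  have "x n \<le> (\<Sum>i<N. x i)"
    by (rule member_le_sum) (use assms in \<open>auto simp: prob_simplex_def\<close>)
  then show ?thesis using assms unfolding prob_simplex_def by auto
qed

lemma X_le1: "w \<in> space M \<Longrightarrow> n < N \<Longrightarrow> X (Suc t) w n \<le> 1"
  using simplex_le1 X_simp by blast

lemma X_meas: "n < N \<Longrightarrow> (\<lambda>w. X (Suc t) w n) \<in> borel_measurable (F (Suc t))"
  using Xmeas by auto

lemma X_measM: "n < N \<Longrightarrow> (\<lambda>w. X (Suc t) w n) \<in> borel_measurable M"
  using meas_M[OF X_meas] .

lemma X_int: "n < N \<Longrightarrow> integrable M (\<lambda>w. X (Suc t) w n)"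
  apply (rule P.integrable_const_bound[where B=1])
  using X_nonneg X_le1 X_measM by auto

lemma mu_meas: "(\<lambda>w. mu M F X t w n) \<in> borel_measurable (F t)"
  unfolding mu_def by simp

lemma nn_mu: assumes "n < N"
  shows "AE w in M. nn_cond_exp M (F t) (\<lambda>w. ennreal (X (Suc t) w n)) w = ennreal (mu M F X t w n)"
proof -
  interpret S: sigma_finite_subalgebra M "F t" by (rule sfs)
  have m1[measurable]: "(\<lambda>w. X (Suc t) w n) \<in> borel_measurable M" using X_measM assms .
  have "AE w in M. nn_cond_exp M (F t) (\<lambda>w. ennreal (- X (Suc t) w n)) w = nn_cond_exp M (F t) (\<lambda>w. 0) w"
    by (rule S.nn_cond_exp_cong) (use X_nonneg assms in \<open>auto simp: ennreal_neg\<close>)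
  moreover have "AE w in M. (\<lambda>w. 0) w = nn_cond_exp M (F t) (\<lambda>w. 0) w"
    by (rule S.nn_cond_exp_F_meas) auto
  moreover have "AE w in M. nn_cond_exp M (F t) (\<lambda>w. ennreal (X (Suc t) w n)) w \<le> nn_cond_exp M (F t) (\<lambda>w. 1) w"
    by (rule S.nn_cond_exp_mono) (use X_le1 assms in \<open>auto\<close>)
  moreover have "AE w in M. (\<lambda>w. 1) w = nn_cond_exp M (F t) (\<lambda>w. 1) w"
    by (rule S.nn_cond_exp_F_meas) auto
  ultimately show ?thesis
  proof eventually_elim
    case (elim w)
    then have "nn_cond_exp M (F t) (\<lambda>w. ennreal (X (Suc t) w n)) w \<le> 1" by simp
    then have "nn_cond_exp M (F t) (\<lambda>w. ennreal (X (Suc t) w n)) w < top"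
      using ennreal_one_less_top le_less_trans by blast
    then show ?case using elim unfolding mu_def real_cond_exp_def
      by simp
  qed
qed

lemma cexp_key:
  assumes g: "g \<in> borel_measurable (F t)" and n: "n < N"
  shows "(\<integral>\<^sup>+w. ennreal (g w) * ennreal (X (Suc t) w n) \<partial>M)
       = (\<integral>\<^sup>+w. ennreal (g w) * ennreal (mu M F X t w n) \<partial>M)"
proof -
  interpret S: sigma_finite_subalgebra M "F t" by (rule sfs)
  have "(\<integral>\<^sup>+w. ennreal (g w) * ennreal (X (Suc t) w n) \<partial>M)
     = (\<integral>\<^sup>+w. ennreal (g w) * nn_cond_exp M (F t) (\<lambda>w. ennreal (X (Suc t) w n)) w \<partial>M)"
    by (rule S.nn_cond_exp_intg[symmetric]) (use g X_measM n in auto)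
  also have "\<dots> = (\<integral>\<^sup>+w. ennreal (g w) * ennreal (mu M F X t w n) \<partial>M)"
    apply (rule nn_integral_cong_AE)
    using nn_mu[OF n, of t] by eventually_elim simp
  finally show ?thesis .
qed


definition good :: "nat \<Rightarrow> 'w \<Rightarrow> bool" where
  "good t w \<longleftrightarrow> (\<forall>n<N. eps \<le> mu M F X t w n) \<and> (\<Sum>n<N. mu M F X t w n) = 1"

definition muT :: "nat \<Rightarrow> 'w \<Rightarrow> nat \<Rightarrow> real" where
  "muT t w n = (if good t w then mu M F X t w n else 1 / real N)"

lemma mu_meas' [measurable]: "(\<lambda>w. mu M F X t w n) \<in> borel_measurable (F t)"
  by (rule mu_meas)

lemma good_meas [measurable]: "Measurable.pred (F t) (good t)"
  unfolding good_def by measurable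

lemma muT_meas [measurable]: "(\<lambda>w. muT t w n) \<in> borel_measurable (F t)"
  unfolding muT_def by measurable

lemma muT_measM [measurable]: "(\<lambda>w. muT t w n) \<in> borel_measurable M"
  by (rule meas_M[of _ t]) simp

lemma muT_pos: "n < N \<Longrightarrow> 0 < muT t w n"
  unfolding muT_def good_def using eps_pos N_pos by (auto intro: less_le_trans)

lemma muT_sum: "(\<Sum>n<N. muT t w n) = 1"
proof (cases "good t w")
  case True then show ?thesis unfolding muT_def good_def by simp
next
  case False then show ?thesis unfolding muT_def using N_pos by simp
qed

lemma muT_simplex: "muT t w \<in> prob_simplex N"
  unfolding prob_simplex_def using muT_sum muT_pos less_imp_le by blast

lemma muT_le1: "n < N \<Longrightarrow> muT t w n \<le> 1"
  using simplex_le1 muT_simplex by blast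

lemma mu_sum_AE: "AE w in M. (\<Sum>n<N. mu M F X t w n) = 1"
proof -
  interpret S: sigma_finite_subalgebra M "F t" by (rule sfs)
  define Xf where "Xf n = (\<lambda>w. if n < N then X (Suc t) w n else 0)" for n
  have intf: "integrable M (Xf n)" for n
    unfolding Xf_def using X_int by (cases "n < N") auto
  have mXf[measurable]: "Xf n \<in> borel_measurable M" for n
    using intf by auto
  have e1: "AE w in M. real_cond_exp M (F t) (\<lambda>w. \<Sum>n<N. Xf n w) w = (\<Sum>n<N. real_cond_exp M (F t) (Xf n) w)"
    by (rule S.real_cond_exp_sum) (rule intf)
  have e2: "AE w in M. real_cond_exp M (F t) (\<lambda>w. \<Sum>n<N. Xf n w) w = real_cond_exp M (F t) (\<lambda>w. 1) w"
    apply (rule S.real_cond_exp_cong)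
    apply (auto simp: Xf_def X_sum)
    apply (rule borel_measurable_sum) using X_measM by auto
  have e3: "AE w in M. real_cond_exp M (F t) (\<lambda>w. 1) w = 1"
    by (rule S.real_cond_exp_F_meas) auto
  have e4: "(\<Sum>n<N. real_cond_exp M (F t) (Xf n) w) = (\<Sum>n<N. mu M F X t w n)" for w
    by (rule sum.cong) (auto simp: Xf_def mu_def)
  show ?thesis using e1 e2 e3 by eventually_elim (simp add: e4)
qed

lemma AE_good: "AE w in M. \<forall>t. good t w"
proof -
  have "AE w in M. good t w" for t
  proof -
    have "AE w in M. \<forall>n. n < N \<longrightarrow> eps \<le> mu M F X t w n"
      by (subst AE_all_countable) (use mu_ge in auto)
    with mu_sum_AE[of t] show ?thesis unfolding good_def by eventually_elim auto
  qed
  then show ?thesis by (subst AE_all_countable) auto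
qed

lemma good_muT: "good t w \<Longrightarrow> muT t w n = mu M F X t w n"
  unfolding muT_def by auto

lemma good_ge: "good t w \<Longrightarrow> n < N \<Longrightarrow> eps \<le> muT t w n"
  unfolding muT_def good_def by auto

lemma cexp_keyT:
  assumes g: "g \<in> borel_measurable (F t)" and n: "n < N"
  shows "(\<integral>\<^sup>+w. ennreal (g w) * ennreal (X (Suc t) w n) \<partial>M)
       = (\<integral>\<^sup>+w. ennreal (g w) * ennreal (muT t w n) \<partial>M)"
  unfolding cexp_key[OF assms]
  apply (rule nn_integral_cong_AE)
  using AE_good by eventually_elim (simp add: good_muT)

end


context mkt begin

interpretation P: prob_space M by (rule ps)

lemma supermart_bdd:
  assumes Zm: "\<And>t. (\<lambda>w. Z t w) \<in> borel_measurable (F t)"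
    and Znn: "\<And>t w. w \<in> space M \<Longrightarrow> 0 \<le> Z t w"
    and step: "\<And>t B. B \<in> sets (F t) \<Longrightarrow>
       (\<integral>\<^sup>+w. ennreal (Z (Suc t) w) * indicator B w \<partial>M) \<le> (\<integral>\<^sup>+w. ennreal (Z t w) * indicator B w \<partial>M)"
    and Z0: "\<And>w. w \<in> space M \<Longrightarrow> Z 0 w = z0"
  shows "AE w in M. \<exists>C. \<forall>t. Z t w \<le> C"
proof -
  define A where "A a T = {w \<in> space M. \<forall>t\<le>T. Z t w \<le> a}" for a T
  have ZmM[measurable]: "(\<lambda>w. Z t w) \<in> borel_measurable M" for t using meas_M[OF Zm] .
  have AF: "A a T \<in> sets (F T)" for a T
  proof -
    have "A a T = space (F T) \<inter> (\<Inter>t\<in>{..T}. {w\<in>space (F T). Z t w \<le> a})"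
      unfolding A_def by auto
    moreover have "{w\<in>space (F T). Z t w \<le> a} \<in> sets (F T)" if "t \<le> T" for t
    proof -
      have [measurable]: "(\<lambda>w. Z t w) \<in> borel_measurable (F T)" using meas_mono[OF that Zm] .
      show ?thesis by measurable
    qed
    ultimately show ?thesis by auto
  qed
  have AM[measurable]: "A a T \<in> sets M" for a T using sets_F_M[OF AF] .
  define L where "L a T = (\<integral>\<^sup>+w. ennreal (Z T w) * indicator (A a T) w + ennreal a * indicator (space M - A a T) w \<partial>M)" for a T
  have L0: "L a 0 \<le> ennreal z0" if "a \<ge> 0" for a
  proof -
    have "L a 0 \<le> (\<integral>\<^sup>+w. ennreal z0 \<partial>M)"
      unfolding L_def
      apply (rule nn_integral_mono)
      using Z0 by (auto simp: A_def indicator_def intro: ennreal_leI)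
    also have "\<dots> = ennreal z0" by (simp add: P.emeasure_space_1)
    finally show ?thesis .
  qed
  have LS: "L a (Suc T) \<le> L a T" if "a \<ge> 0" for a T
  proof -
    have "L a (Suc T) \<le> (\<integral>\<^sup>+w. ennreal (Z (Suc T) w) * indicator (A a T) w + ennreal a * indicator (space M - A a T) w \<partial>M)"
      unfolding L_def
      apply (rule nn_integral_mono)
      subgoal for w
        using that by (cases "w \<in> A a T"; cases "w \<in> A a (Suc T)") (auto simp: A_def indicator_def le_Suc_eq)
      done
    also have "\<dots> = (\<integral>\<^sup>+w. ennreal (Z (Suc T) w) * indicator (A a T) w \<partial>M) + (\<integral>\<^sup>+w. ennreal a * indicator (space M - A a T) w \<partial>M)"
      by (rule nn_integral_add) auto
    also have "\<dots> \<le> (\<integral>\<^sup>+w. ennreal (Z T w) * indicator (A a T) w \<partial>M) + (\<integral>\<^sup>+w. ennreal a * indicator (space M - A a T) w \<partial>M)"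
      using step[OF AF] by (rule add_right_mono)
    also have "\<dots> = L a T"
      unfolding L_def by (rule nn_integral_add[symmetric]) auto
    finally show ?thesis .
  qed
  have Lb: "L a T \<le> ennreal z0" if "a \<ge> 0" for a T
  proof (induction T)
    case 0 then show ?case using L0[OF that] .
  next
    case (Suc T) then show ?case using LS[OF that, of T] by order
  qed
  have mb: "ennreal a * emeasure M (space M - A a T) \<le> ennreal z0" if "a \<ge> 0" for a T
  proof -
    have "ennreal a * emeasure M (space M - A a T) = (\<integral>\<^sup>+w. ennreal a * indicator (space M - A a T) w \<partial>M)"
      by (rule nn_integral_cmult_indicator[symmetric]) auto
    also have "\<dots> \<le> L a T" unfolding L_def by (rule nn_integral_mono) auto
    finally show ?thesis using Lb[OF that, of T] by order
  qed
  define B where "B a = {w \<in> space M. \<exists>t. a < Z t w}" for a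
  have BU: "B a = (\<Union>T. space M - A a T)" for a
  proof (rule set_eqI)
    fix w show "w \<in> B a \<longleftrightarrow> w \<in> (\<Union>T. space M - A a T)"
      unfolding B_def A_def using le_refl by (auto simp: not_le)
  qed
  have BM[measurable]: "B a \<in> sets M" for a unfolding BU by auto
  have mB: "ennreal a * emeasure M (B a) \<le> ennreal z0" if "a \<ge> 0" for a
  proof -
    have inc: "incseq (\<lambda>T. space M - A a T)"
      unfolding incseq_def A_def by auto
    have "emeasure M (B a) = (SUP T. emeasure M (space M - A a T))"
      unfolding BU by (rule SUP_emeasure_incseq[symmetric]) (use inc in auto)
    then have "ennreal a * emeasure M (B a) = (SUP T. ennreal a * emeasure M (space M - A a T))"
      by (simp add: SUP_mult_left_ennreal)
    also have "\<dots> \<le> ennreal z0"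
      using mb[OF that] by (simp add: SUP_least)
    finally show ?thesis .
  qed
  define S where "S = (\<Inter>k::nat. B (real k))"
  have SM[measurable]: "S \<in> sets M" unfolding S_def by auto
  have pS: "P.prob S \<le> z0 / real (Suc k)" for k
  proof -
    have "P.prob S \<le> P.prob (B (real (Suc k)))"
      by (rule P.finite_measure_mono) (unfold S_def, blast intro: INT_lower[of "Suc k" UNIV "\<lambda>k. B (real k)", simplified], rule BM)
    moreover have "real (Suc k) * P.prob (B (real (Suc k))) \<le> z0"
    proof -
      have "ennreal (real (Suc k)) * emeasure M (B (real (Suc k))) \<le> ennreal z0" using mB[of "real (Suc k)"] by simp
      then have "ennreal (real (Suc k) * P.prob (B (real (Suc k)))) \<le> ennreal z0"
        by (simp add: P.emeasure_eq_measure ennreal_mult)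
      moreover have "z0 \<ge> 0"
      proof -
        obtain w where "w \<in> space M" using P.not_empty by blast
        then show ?thesis using Z0 Znn by force
      qed
      ultimately show ?thesis by (simp add: ennreal_le_iff)
    qed
    then have "P.prob (B (real (Suc k))) \<le> z0 / real (Suc k)"
      by (simp add: pos_le_divide_eq mult.commute del: of_nat_Suc)
    ultimately show ?thesis by (rule order_trans)
  qed
  have "P.prob S = 0"
  proof (rule ccontr)
    assume "P.prob S \<noteq> 0"
    then have pos: "P.prob S > 0" using measure_nonneg[of M S] by linarith
    obtain k :: nat where "z0 / P.prob S < real k" using reals_Archimedean2 by blast
    then have "z0 < real k * P.prob S" using pos by (simp add: field_simps)
    moreover have "P.prob S * real (Suc k) \<le> z0" using pS[of k] by (simp add: field_simps)
    moreover have "P.prob S * real (Suc k) = real k * P.prob S + P.prob S" by (simp add: algebra_simps)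
    ultimately show False using pos by linarith
  qed
  then have "S \<in> null_sets M" using SM by (simp add: P.emeasure_eq_measure null_sets_def)
  then show ?thesis
  proof (rule AE_I')
    show "{w \<in> space M. \<not> (\<exists>C. \<forall>t. Z t w \<le> C)} \<subseteq> S"
    proof
      fix w assume w: "w \<in> {w \<in> space M. \<not> (\<exists>C. \<forall>t. Z t w \<le> C)}"
      have "w \<in> B (real k)" for k
      proof -
        from w have "\<not> (\<forall>t. Z t w \<le> real k)" by blast
        then obtain t where "real k < Z t w" by (auto simp: not_le)
        then show ?thesis using w unfolding B_def by blast
      qed
      then show "w \<in> S" unfolding S_def by blast
    qed
  qed
qed


lemma ennreal_sum_nn: "(\<And>i. i \<in> I \<Longrightarrow> 0 \<le> f i) \<Longrightarrow> ennreal (\<Sum>i\<in>I. f i) = (\<Sum>i\<in>I. ennreal (f i))"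
  by (induction I rule: infinite_finite_induct) (auto simp: ennreal_plus sum_nonneg)

lemma ennreal_split:
  fixes a :: real
  assumes "0 \<le> a" "\<And>n. n < K \<Longrightarrow> 0 \<le> b n" "\<And>n. n < K \<Longrightarrow> 0 \<le> c n"
  shows "ennreal (a + (\<Sum>n<K. b n * c n)) = ennreal a + (\<Sum>n<K. ennreal (b n) * ennreal (c n))"
proof -
  have s0: "0 \<le> (\<Sum>n<K. b n * c n)" by (rule sum_nonneg) (use assms in auto)
  have "ennreal (a + (\<Sum>n<K. b n * c n)) = ennreal a + ennreal (\<Sum>n<K. b n * c n)"
    by (rule ennreal_plus[OF assms(1) s0])
  also have "ennreal (\<Sum>n<K. b n * c n) = (\<Sum>n<K. ennreal (b n * c n))"
    by (rule ennreal_sum_nn) (use assms in auto)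
  also have "\<dots> = (\<Sum>n<K. ennreal (b n) * ennreal (c n))"
    by (rule sum.cong) (use assms in \<open>auto simp: ennreal_mult\<close>)
  finally show ?thesis .
qed

lemma onestep:
  assumes Z'm: "Z' \<in> borel_measurable M"
    and Gm: "G \<in> borel_measurable (F t)" and Gnn: "\<And>w. w \<in> space M \<Longrightarrow> 0 \<le> G w"
    and vm: "v \<in> borel_measurable (F t)" and v01: "\<And>w. w \<in> space M \<Longrightarrow> 0 \<le> v w \<and> v w \<le> 1"
    and hm: "\<And>n. n < N \<Longrightarrow> (\<lambda>w. h w n) \<in> borel_measurable (F t)"
    and hnn: "\<And>w n. w \<in> space M \<Longrightarrow> n < N \<Longrightarrow> 0 \<le> h w n"
    and up: "\<And>w. w \<in> space M \<Longrightarrow> Z' w \<le> G w * ((1 - v w) + v w * (\<Sum>n<N. X (Suc t) w n * h w n))"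
    and down: "\<And>w. w \<in> space M \<Longrightarrow> G w * ((1 - v w) + v w * (\<Sum>n<N. muT t w n * h w n)) \<le> Z w"
    and B: "B \<in> sets (F t)"
  shows "(\<integral>\<^sup>+w. ennreal (Z' w) * indicator B w \<partial>M) \<le> (\<integral>\<^sup>+w. ennreal (Z w) * indicator B w \<partial>M)"
proof -
  define g0 where "g0 w = G w * (1 - v w) * indicator B w" for w
  define g where "g n w = G w * v w * h w n * indicator B w" for n w
  have g0m[measurable]: "g0 \<in> borel_measurable (F t)" unfolding g0_def using Gm vm B by measurable
  have gm[measurable]: "g n \<in> borel_measurable (F t)" if "n < N" for n
    unfolding g_def using Gm vm B hm[OF that] by measurable
  have g0M[measurable]: "g0 \<in> borel_measurable M" using meas_M[OF g0m] .
  have gM[measurable]: "g n \<in> borel_measurable M" if "n < N" for n using meas_M[OF gm[OF that]] .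
  have g0nn: "w \<in> space M \<Longrightarrow> 0 \<le> g0 w" for w unfolding g0_def using Gnn v01 by auto
  have gnn: "w \<in> space M \<Longrightarrow> n < N \<Longrightarrow> 0 \<le> g n w" for w n unfolding g_def using Gnn v01 hnn by auto
  have "(\<integral>\<^sup>+w. ennreal (Z' w) * indicator B w \<partial>M)
      \<le> (\<integral>\<^sup>+w. ennreal (g0 w) + (\<Sum>n<N. ennreal (g n w) * ennreal (X (Suc t) w n)) \<partial>M)"
  proof (rule nn_integral_mono)
    fix w assume w: "w \<in> space M"
    have eq: "G w * ((1 - v w) + v w * (\<Sum>n<N. X (Suc t) w n * h w n)) * indicator B w
        = g0 w + (\<Sum>n<N. g n w * X (Suc t) w n)"
      unfolding g0_def g_def by (simp add: algebra_simps sum_distrib_left sum_distrib_right)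
    have "ennreal (Z' w) * indicator B w = ennreal (Z' w * indicator B w)"
      by (simp add: indicator_def)
    also have "\<dots> \<le> ennreal (G w * ((1 - v w) + v w * (\<Sum>n<N. X (Suc t) w n * h w n)) * indicator B w)"
      apply (rule ennreal_leI) using up[OF w] by (auto simp: indicator_def)
    also have "\<dots> = ennreal (g0 w) + (\<Sum>n<N. ennreal (g n w) * ennreal (X (Suc t) w n))"
      unfolding eq by (rule ennreal_split) (use g0nn[OF w] gnn[OF w] X_nonneg[OF w] in auto)
    finally show "ennreal (Z' w) * indicator B w \<le> ennreal (g0 w) + (\<Sum>n<N. ennreal (g n w) * ennreal (X (Suc t) w n))" .
  qed
  also have "\<dots> = (\<integral>\<^sup>+w. ennreal (g0 w) \<partial>M) + (\<Sum>n<N. \<integral>\<^sup>+w. ennreal (g n w) * ennreal (X (Suc t) w n) \<partial>M)"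
    apply (subst nn_integral_add)
      apply (simp)
     apply (rule borel_measurable_sum) using X_measM apply simp
    apply (subst nn_integral_sum) using X_measM by auto
  also have "\<dots> = (\<integral>\<^sup>+w. ennreal (g0 w) \<partial>M) + (\<Sum>n<N. \<integral>\<^sup>+w. ennreal (g n w) * ennreal (muT t w n) \<partial>M)"
    using cexp_keyT[OF gm] by simp
  also have "\<dots> = (\<integral>\<^sup>+w. ennreal (g0 w) + (\<Sum>n<N. ennreal (g n w) * ennreal (muT t w n)) \<partial>M)"
    apply (subst nn_integral_add)
      apply (simp)
     apply (rule borel_measurable_sum) apply simp
    apply (subst nn_integral_sum) by auto
  also have "\<dots> \<le> (\<integral>\<^sup>+w. ennreal (Z w) * indicator B w \<partial>M)"
  proof (rule nn_integral_mono)
    fix w assume w: "w \<in> space M"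
    have eq: "G w * ((1 - v w) + v w * (\<Sum>n<N. muT t w n * h w n)) * indicator B w
        = g0 w + (\<Sum>n<N. g n w * muT t w n)"
      unfolding g0_def g_def by (simp add: algebra_simps sum_distrib_left sum_distrib_right)
    have "ennreal (g0 w) + (\<Sum>n<N. ennreal (g n w) * ennreal (muT t w n))
        = ennreal (G w * ((1 - v w) + v w * (\<Sum>n<N. muT t w n * h w n)) * indicator B w)"
      unfolding eq by (rule ennreal_split[symmetric]) (use g0nn[OF w] gnn[OF w] muT_pos in \<open>auto intro: less_imp_le\<close>)
    also have "\<dots> \<le> ennreal (Z w * indicator B w)"
      apply (rule ennreal_leI) using down[OF w] by (auto simp: indicator_def)
    also have "\<dots> = ennreal (Z w) * indicator B w"
      by (simp add: indicator_def)
    finally show "ennreal (g0 w) + (\<Sum>n<N. ennreal (g n w) * ennreal (muT t w n)) \<le> ennreal (Z w) * indicator B w" .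
  qed
  finally show ?thesis .
qed

end


lemma pos_comb:
  fixes c x :: "nat \<Rightarrow> real"
  assumes "\<And>n. n < K \<Longrightarrow> 0 < c n" "\<And>n. n < K \<Longrightarrow> 0 \<le> x n" "(\<Sum>n<K. x n) = 1"
  shows "0 < (\<Sum>n<K. c n * x n)"
proof -
  obtain n where n: "n < K" "x n > 0"
  proof (rule ccontr)
    assume "\<not> thesis"
    then have "\<forall>n<K. x n \<le> 0" using that by (meson not_le)
    then have "(\<Sum>n<K. x n) \<le> 0" by (intro sum_nonpos) auto
    then show False using assms(3) by simp
  qed
  have "0 < c n * x n" using n assms(1) by auto
  also have "\<dots> \<le> (\<Sum>n<K. c n * x n)"
    by (rule member_le_sum) (use n assms in \<open>auto intro: mult_nonneg_nonneg less_imp_le\<close>)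
  finally show ?thesis .
qed

locale prof = mkt +
  fixes Ma :: nat and nus :: "nat \<Rightarrow> nat \<Rightarrow> 'a \<Rightarrow> real" and lams :: "nat \<Rightarrow> nat \<Rightarrow> 'a \<Rightarrow> nat \<Rightarrow> real"
    and W0 :: "nat \<Rightarrow> real"
  assumes adm: "admissible_profile M F N Ma nus lams"
    and W0pos: "\<forall>k<Ma. 0 < W0 k" and W0sum: "(\<Sum>k<Ma. W0 k) = 1"
begin

abbreviation W where "W t w k \<equiv> wealth N Ma X nus lams W0 t w k"
abbreviation D where "D t w n \<equiv> (\<Sum>k<Ma. nus k t w * lams k t w n * W t w k)"
abbreviation nb where "nb t w \<equiv> nu_bar N Ma X nus lams W0 t w"
abbreviation lb where "lb t w n \<equiv> lam_bar N Ma X nus lams W0 t w n"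

lemma strat: "k < Ma \<Longrightarrow> is_strategy M F N (nus k) (lams k)"
  using adm unfolding admissible_profile_def by auto

lemma nus_meas [measurable]: "k < Ma \<Longrightarrow> nus k t \<in> borel_measurable (F t)"
  using strat unfolding is_strategy_def by auto

lemma lams_meas [measurable]: "k < Ma \<Longrightarrow> n < N \<Longrightarrow> (\<lambda>w. lams k t w n) \<in> borel_measurable (F t)"
  using strat unfolding is_strategy_def by auto

lemma nus01: "k < Ma \<Longrightarrow> w \<in> space M \<Longrightarrow> 0 \<le> nus k t w \<and> nus k t w \<le> 1"
  using strat unfolding is_strategy_def by auto

lemma lams_simp: "k < Ma \<Longrightarrow> w \<in> space M \<Longrightarrow> lams k t w \<in> prob_simplex N"
  using strat unfolding is_strategy_def by auto

lemma lams_nn: "k < Ma \<Longrightarrow> w \<in> space M \<Longrightarrow> n < N \<Longrightarrow> 0 \<le> lams k t w n"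
  using lams_simp unfolding prob_simplex_def by auto

lemma lams_sum: "k < Ma \<Longrightarrow> w \<in> space M \<Longrightarrow> (\<Sum>n<N. lams k t w n) = 1"
  using lams_simp unfolding prob_simplex_def by auto

definition k0 where "k0 = (SOME k. k < Ma \<and> (\<forall>t. \<forall>w\<in>space M. 0 < nus k t w \<and> (\<forall>n<N. 0 < lams k t w n)))"

lemma k0: "k0 < Ma" "\<And>t w. w \<in> space M \<Longrightarrow> 0 < nus k0 t w" "\<And>t w n. w \<in> space M \<Longrightarrow> n < N \<Longrightarrow> 0 < lams k0 t w n"
proof -
  have "\<exists>k. k < Ma \<and> (\<forall>t. \<forall>w\<in>space M. 0 < nus k t w \<and> (\<forall>n<N. 0 < lams k t w n))"
    using adm unfolding admissible_profile_def by auto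
  from someI_ex[OF this] show "k0 < Ma" "\<And>t w. w \<in> space M \<Longrightarrow> 0 < nus k0 t w" "\<And>t w n. w \<in> space M \<Longrightarrow> n < N \<Longrightarrow> 0 < lams k0 t w n"
    unfolding k0_def by auto
qed

lemma D_pos_gen:
  assumes w: "w \<in> space M" and nn: "\<forall>k<Ma. 0 \<le> W t w k" and p: "0 < W t w k0" and n: "n < N"
  shows "0 < D t w n"
proof -
  have "0 < nus k0 t w * lams k0 t w n * W t w k0" using k0 w n p by auto
  also have "\<dots> \<le> D t w n"
    by (rule member_le_sum[of k0 "{..<Ma}" "\<lambda>k. nus k t w * lams k t w n * W t w k"])
       (use k0 nn nus01 lams_nn w n in \<open>auto intro!: mult_nonneg_nonneg\<close>)
  finally show ?thesis .
qed

lemma wealth_basic: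
  assumes w: "w \<in> space M"
  shows "(\<forall>k<Ma. 0 \<le> W t w k) \<and> 0 < W t w k0 \<and> (\<Sum>k<Ma. W t w k) = 1"
proof (induction t)
  case 0
  then show ?case using W0pos W0sum k0 by auto
next
  case (Suc t)
  then have nn: "\<forall>k<Ma. 0 \<le> W t w k" and p: "0 < W t w k0" and s: "(\<Sum>k<Ma. W t w k) = 1" by auto
  have Dp: "n < N \<Longrightarrow> 0 < D t w n" for n using D_pos_gen[OF w nn p] .
  have nbp: "0 < (\<Sum>k<Ma. nus k t w * W t w k)"
  proof -
    have "0 < nus k0 t w * W t w k0" using k0 w p by auto
    also have "\<dots> \<le> (\<Sum>k<Ma. nus k t w * W t w k)"
      by (rule member_le_sum[of k0 "{..<Ma}" "\<lambda>k. nus k t w * W t w k"])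
         (use k0 nn nus01 w in \<open>auto intro!: mult_nonneg_nonneg\<close>)
    finally show ?thesis .
  qed
  have nnS: "0 \<le> W (Suc t) w k" if k: "k < Ma" for k
  proof -
    have "0 \<le> (\<Sum>k<Ma. nus k t w * W t w k) *
       (\<Sum>n<N. (nus k t w * lams k t w n * W t w k) / D t w n * X (Suc t) w n)"
      using nbp Dp nn nus01[OF k w] lams_nn[OF k w] X_nonneg[OF w] k
      by (intro mult_nonneg_nonneg[OF less_imp_le[OF nbp]] sum_nonneg divide_nonneg_pos mult_nonneg_nonneg) auto
    moreover have "0 \<le> (1 - nus k t w) * W t w k" using nus01[OF k w] nn k by auto
    ultimately show ?thesis by simp
  qed
  have pS: "0 < W (Suc t) w k0"
  proof -
    have "0 < (\<Sum>n<N. (nus k0 t w * lams k0 t w n * W t w k0) / D t w n * X (Suc t) w n)"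
      by (rule pos_comb) (use k0 w p Dp X_nonneg[OF w] X_sum[OF w] in auto)
    then have "0 < (\<Sum>k<Ma. nus k t w * W t w k) *
       (\<Sum>n<N. (nus k0 t w * lams k0 t w n * W t w k0) / D t w n * X (Suc t) w n)"
      using nbp by auto
    moreover have "0 \<le> (1 - nus k0 t w) * W t w k0" using nus01[OF k0(1) w] p by auto
    ultimately show ?thesis by simp
  qed
  have sS: "(\<Sum>k<Ma. W (Suc t) w k) = 1"
  proof -
    have "(\<Sum>k<Ma. W (Suc t) w k) = (\<Sum>k<Ma. nus k t w * W t w k) *
          (\<Sum>k<Ma. \<Sum>n<N. (nus k t w * lams k t w n * W t w k) / D t w n * X (Suc t) w n)
          + (\<Sum>k<Ma. (1 - nus k t w) * W t w k)"
      by (simp add: sum.distrib sum_distrib_left)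
    also have "(\<Sum>k<Ma. \<Sum>n<N. (nus k t w * lams k t w n * W t w k) / D t w n * X (Suc t) w n)
        = (\<Sum>n<N. (\<Sum>k<Ma. nus k t w * lams k t w n * W t w k) / D t w n * X (Suc t) w n)"
    proof (subst sum.swap, rule sum.cong)
      fix n
      show "(\<Sum>k<Ma. nus k t w * lams k t w n * W t w k / D t w n * X (Suc t) w n) =
          (\<Sum>k<Ma. nus k t w * lams k t w n * W t w k) / D t w n * X (Suc t) w n"
        by (simp only: sum_distrib_right sum_divide_distrib)
    qed simp
    also have "\<dots> = (\<Sum>n<N. X (Suc t) w n)"
      by (rule sum.cong) (use Dp in \<open>auto dest: less_imp_neq[symmetric]\<close>)
    also have "\<dots> = 1" using X_sum[OF w] .
    also have "(\<Sum>k<Ma. (1 - nus k t w) * W t w k) = 1 - (\<Sum>k<Ma. nus k t w * W t w k)"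
      using s by (simp add: algebra_simps sum_subtractf)
    finally show ?thesis by simp
  qed
  show ?case using nnS pS sS by auto
qed

lemma W_nn: "w \<in> space M \<Longrightarrow> k < Ma \<Longrightarrow> 0 \<le> W t w k"
  using wealth_basic by auto

lemma W_sum: "w \<in> space M \<Longrightarrow> (\<Sum>k<Ma. W t w k) = 1"
  using wealth_basic by auto

lemma W_le1: "w \<in> space M \<Longrightarrow> k < Ma \<Longrightarrow> W t w k \<le> 1"
  using member_le_sum[of k "{..<Ma}" "W t w"] W_nn W_sum by auto

lemma D_pos: "w \<in> space M \<Longrightarrow> n < N \<Longrightarrow> 0 < D t w n"
  using D_pos_gen wealth_basic by blast

lemma nb_eq: "nb t w = (\<Sum>k<Ma. nus k t w * W t w k)"
  unfolding nu_bar_def ..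

lemma nb_pos: "w \<in> space M \<Longrightarrow> 0 < nb t w"
proof -
  assume w: "w \<in> space M"
  have "0 < nus k0 t w * W t w k0" using k0 w wealth_basic by auto
  also have "\<dots> \<le> nb t w" unfolding nb_eq
    by (rule member_le_sum[of k0 "{..<Ma}" "\<lambda>k. nus k t w * W t w k"])
       (use k0 W_nn nus01 w in \<open>auto intro!: mult_nonneg_nonneg\<close>)
  finally show ?thesis .
qed

lemma nb_le1: "w \<in> space M \<Longrightarrow> nb t w \<le> 1"
proof -
  assume w: "w \<in> space M"
  have "nb t w \<le> (\<Sum>k<Ma. W t w k)" unfolding nb_eq
    by (rule sum_mono) (use nus01 W_nn w in \<open>auto intro: mult_left_le_one_le\<close>)
  then show ?thesis using W_sum w by simp
qed

lemma lb_eq: "lb t w n = D t w n / nb t w"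
  unfolding lam_bar_def ..

lemma lb_pos: "w \<in> space M \<Longrightarrow> n < N \<Longrightarrow> 0 < lb t w n"
  unfolding lb_eq using D_pos nb_pos by auto

lemma lb_sum: "w \<in> space M \<Longrightarrow> (\<Sum>n<N. lb t w n) = 1"
proof -
  assume w: "w \<in> space M"
  have "(\<Sum>n<N. D t w n) = (\<Sum>k<Ma. nus k t w * W t w k * (\<Sum>n<N. lams k t w n))"
    by (subst sum.swap) (simp add: sum_distrib_left sum_distrib_right mult_ac)
  also have "\<dots> = nb t w" unfolding nb_eq by (rule sum.cong) (use lams_sum w in auto)
  finally have e: "(\<Sum>n<N. D t w n) = nb t w" .
  have "nb t w \<noteq> 0" using nb_pos[OF w, of t] by linarith
  then show ?thesis unfolding lb_eq sum_divide_distrib[symmetric] e by simp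
qed

lemma lb_le1: "w \<in> space M \<Longrightarrow> n < N \<Longrightarrow> lb t w n \<le> 1"
  using member_le_sum[of n "{..<N}" "lb t w"] lb_pos lb_sum by (auto intro: less_imp_le)

lemma W_step:
  assumes w: "w \<in> space M" and m: "m < Ma"
  shows "W (Suc t) w m = W t w m * ((1 - nus m t w) + nus m t w * (\<Sum>n<N. X (Suc t) w n * (lams m t w n / lb t w n)))"
proof -
  have "(\<Sum>k<Ma. nus k t w * W t w k) * (\<Sum>n<N. (nus m t w * lams m t w n * W t w m) / D t w n * X (Suc t) w n)
      = W t w m * nus m t w * (\<Sum>n<N. X (Suc t) w n * (lams m t w n / lb t w n))"
    unfolding nb_eq[symmetric] lb_eq sum_distrib_left
    by (rule sum.cong) (use nb_pos[OF w] D_pos[OF w] in \<open>auto simp: field_simps\<close>)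
  then show ?thesis by (simp add: algebra_simps)
qed

lemma W_meas [measurable]: "k < Ma \<Longrightarrow> (\<lambda>w. W t w k) \<in> borel_measurable (F t)"
proof (induction t arbitrary: k)
  case 0
  then show ?case by simp
next
  case (Suc t)
  have [measurable]: "(\<lambda>w. W t w k) \<in> borel_measurable (F (Suc t))" if "k < Ma" for k
    using meas_Suc[OF Suc.IH[OF that]] .
  have [measurable]: "nus k t \<in> borel_measurable (F (Suc t))" if "k < Ma" for k
    using meas_Suc[OF nus_meas[OF that]] .
  have [measurable]: "(\<lambda>w. lams k t w n) \<in> borel_measurable (F (Suc t))" if "k < Ma" "n < N" for k n
    using meas_Suc[OF lams_meas[OF that]] .
  have [measurable]: "(\<lambda>w. X (Suc t) w n) \<in> borel_measurable (F (Suc t))" if "n < N" for n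
    using X_meas[OF that] .
  show ?case
    apply simp
    apply (intro borel_measurable_add borel_measurable_times borel_measurable_sum borel_measurable_divide borel_measurable_diff)
    using Suc.prems by auto
qed

lemma D_meas [measurable]: "n < N \<Longrightarrow> (\<lambda>w. D t w n) \<in> borel_measurable (F t)"
  by (intro borel_measurable_add borel_measurable_times borel_measurable_sum) auto

lemma nb_meas [measurable]: "(\<lambda>w. nb t w) \<in> borel_measurable (F t)"
  unfolding nb_eq by (intro borel_measurable_times borel_measurable_sum) auto

lemma lb_meas [measurable]: "n < N \<Longrightarrow> (\<lambda>w. lb t w n) \<in> borel_measurable (F t)"
  unfolding lb_eq by (intro borel_measurable_divide D_meas nb_meas)

end


lemma tangent_isqrt:
  fixes z Y :: real assumes z: "0 < z" and Y: "0 < Y"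
  shows "1 / sqrt Y - (z - Y) / (2 * sqrt Y ^ 3) \<le> 1 / sqrt z"
proof -
  define S where "S = sqrt Y"
  define s where "s = sqrt z"
  have S: "S > 0" and s: "s > 0" using z Y by (auto simp: S_def s_def)
  have zs: "z = s^2" and YS: "Y = S^2" using z Y by (auto simp: S_def s_def)
  have "1 / s - (1 / S - (s^2 - S^2) / (2 * S^3)) = (S - s)^2 * (2*S + s) / (2 * S^3 * s)"
    using S s by (simp add: field_simps power2_eq_square power3_eq_cube)
  also have "\<dots> \<ge> 0" using S s by (intro divide_nonneg_pos mult_nonneg_nonneg) auto
  finally have "0 \<le> 1 / s - (1 / S - (s^2 - S^2) / (2 * S^3))" .
  then show ?thesis unfolding S_def s_def using z Y by simp
qed

lemma isqrt_jensen:
  fixes x y :: "nat \<Rightarrow> real" and v :: real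
  assumes v: "0 \<le> v" "v \<le> 1" and x: "\<And>n. n < K \<Longrightarrow> 0 \<le> x n" and xs: "(\<Sum>n<K. x n) = 1"
    and y: "\<And>n. n < K \<Longrightarrow> 0 < y n" and Ypos: "0 < (1 - v) + v * (\<Sum>n<K. x n * y n)"
  shows "1 / sqrt ((1 - v) + v * (\<Sum>n<K. x n * y n)) \<le> (1 - v) + v * (\<Sum>n<K. x n * (1 / sqrt (y n)))"
proof -
  define Y where "Y = (1 - v) + v * (\<Sum>n<K. x n * y n)"
  have Y: "Y > 0" using Ypos Y_def by simp
  define a where "a = 1 / sqrt Y + Y / (2 * sqrt Y ^ 3)"
  define b where "b = 1 / (2 * sqrt Y ^ 3)"
  have Y3: "sqrt Y ^ 3 > 0" using Y by simp
  have T: "a - b * z \<le> 1 / sqrt z" if "z > 0" for z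
  proof -
    have "a - b * z = 1 / sqrt Y - (z - Y) / (2 * sqrt Y ^ 3)"
      unfolding a_def b_def using Y3 by (simp add: field_simps)
    then show ?thesis using tangent_isqrt[OF that Y] by simp
  qed
  have e1: "a - b * Y = 1 / sqrt Y"
    unfolding a_def b_def using Y3 by (simp add: field_simps)
  have e2: "a - b * Y = (1 - v) * (a - b * 1) + v * (\<Sum>n<K. x n * (a - b * y n))"
  proof -
    have "(\<Sum>n<K. x n * (a - b * y n)) = (\<Sum>n<K. a * x n - b * (x n * y n))"
      by (rule sum.cong) (auto simp: algebra_simps)
    also have "\<dots> = a * (\<Sum>n<K. x n) - b * (\<Sum>n<K. x n * y n)"
      by (simp add: sum_subtractf sum_distrib_left)
    finally have e: "(\<Sum>n<K. x n * (a - b * y n)) = a - b * (\<Sum>n<K. x n * y n)" using xs by simp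
    show ?thesis unfolding e Y_def by (simp add: algebra_simps)
  qed
  have e3: "(1 - v) * (a - b * 1) + v * (\<Sum>n<K. x n * (a - b * y n)) \<le> (1 - v) * (1 / sqrt 1) + v * (\<Sum>n<K. x n * (1 / sqrt (y n)))"
    apply (intro add_mono mult_left_mono sum_mono)
    using T[of 1] T y x v by auto
  from e1 e2 e3 have "1 / sqrt Y \<le> (1 - v) * (1 / sqrt 1) + v * (\<Sum>n<K. x n * (1 / sqrt (y n)))" by linarith
  then show ?thesis unfolding Y_def by simp
qed


lemma pos_mix: "0 \<le> v \<Longrightarrow> v \<le> 1 \<Longrightarrow> 0 < S \<Longrightarrow> 0 < (1 - v) + v * (S::real)"
  by (cases "v = 0") (auto intro: add_nonneg_pos)

context prof begin

definition yv where "yv m t w n = lams m t w n / lb t w n"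
definition qf where "qf m t w = (1 - nus m t w) + nus m t w * (\<Sum>n<N. muT t w n * (1 / sqrt (yv m t w n)))"
definition rf where "rf m t w = (1 - nus m t w) + nus m t w * (\<Sum>n<N. muT t w n * yv m t w n)"

lemma yv_meas [measurable]: "m < Ma \<Longrightarrow> n < N \<Longrightarrow> (\<lambda>w. yv m t w n) \<in> borel_measurable (F t)"
  unfolding yv_def by (intro borel_measurable_divide lams_meas lb_meas)

lemma qf_meas [measurable]: "m < Ma \<Longrightarrow> qf m t \<in> borel_measurable (F t)"
  unfolding qf_def[abs_def]
  by (intro borel_measurable_add borel_measurable_times borel_measurable_diff borel_measurable_sum
      borel_measurable_divide borel_measurable_const yv_meas muT_meas nus_meas borel_measurable_sqrt) auto

lemma rf_meas [measurable]: "m < Ma \<Longrightarrow> rf m t \<in> borel_measurable (F t)"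
  unfolding rf_def[abs_def]
  by (intro borel_measurable_add borel_measurable_times borel_measurable_diff borel_measurable_sum
      borel_measurable_const yv_meas muT_meas nus_meas) auto

lemma prod_meas:
  fixes f :: "nat \<Rightarrow> 'a \<Rightarrow> real"
  assumes a: "\<And>s. s < t \<Longrightarrow> f s \<in> borel_measurable (F s)"
  shows "(\<lambda>w. \<Prod>s<t. f s w) \<in> borel_measurable (F t)"
proof -
  note a = a
  have "f s \<in> borel_measurable (F t)" if "s \<in> {..<t}" for s
    using meas_mono[of s t, OF _ a[of s]] that by auto
  then show ?thesis by (rule borel_measurable_prod[where S="{..<t}" and f=f])
qed

lemma yv_pos: "m < Ma \<Longrightarrow> w \<in> space M \<Longrightarrow> n < N \<Longrightarrow> 0 < lams m t w n \<Longrightarrow> 0 < yv m t w n"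
  unfolding yv_def using lb_pos by auto

lemma yv_nn: "m < Ma \<Longrightarrow> w \<in> space M \<Longrightarrow> n < N \<Longrightarrow> 0 \<le> yv m t w n"
  unfolding yv_def using lb_pos lams_nn by (auto intro: divide_nonneg_pos)

lemma rf_pos: assumes "m < Ma" "w \<in> space M" shows "0 < rf m t w"
proof -
  have "0 < (\<Sum>n<N. (muT t w n / lb t w n) * lams m t w n)"
    by (rule pos_comb) (use assms muT_pos lb_pos lams_nn lams_sum in auto)
  also have "\<dots> = (\<Sum>n<N. muT t w n * yv m t w n)" unfolding yv_def by (simp add: field_simps)
  finally show ?thesis unfolding rf_def using nus01[OF assms] by (intro pos_mix) auto
qed

lemma qf_pos: assumes "m < Ma" "w \<in> space M" and lp: "\<And>n. n < N \<Longrightarrow> 0 < lams m t w n"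
  shows "0 < qf m t w"
proof -
  have "0 < (\<Sum>n<N. muT t w n * (1 / sqrt (yv m t w n)))"
    apply (rule sum_pos) using N_pos muT_pos yv_pos[OF assms(1,2) _ lp] by auto
  then show ?thesis unfolding qf_def using nus01[OF assms(1,2)] by (intro pos_mix) auto
qed

lemma R_pos: assumes "m < Ma" "w \<in> space M" and lp: "\<And>n. n < N \<Longrightarrow> 0 < lams m t w n"
  shows "0 < (1 - nus m t w) + nus m t w * (\<Sum>n<N. X (Suc t) w n * yv m t w n)"
proof -
  have "0 < (\<Sum>n<N. yv m t w n * X (Suc t) w n)"
    by (rule pos_comb) (use yv_pos[OF assms(1,2) _ lp] X_nonneg[OF assms(2)] X_sum[OF assms(2)] in auto)
  then show ?thesis using nus01[OF assms(1,2)] by (intro pos_mix) (auto simp: mult.commute)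
qed

lemma W_step': "w \<in> space M \<Longrightarrow> m < Ma \<Longrightarrow>
  W (Suc t) w m = W t w m * ((1 - nus m t w) + nus m t w * (\<Sum>n<N. X (Suc t) w n * yv m t w n))"
  unfolding yv_def by (rule W_step)

lemma W_pos_agent:
  assumes m: "m < Ma" and lp: "\<forall>t. \<forall>w\<in>space M. \<forall>n<N. 0 < lams m t w n" and w: "w \<in> space M"
  shows "0 < W t w m"
proof (induction t)
  case 0 then show ?case using W0pos m by simp
next
  case (Suc t)
  then show ?case unfolding W_step'[OF w m] using R_pos[OF m w] lp w by auto
qed

lemma sqrt_bound:
  assumes m: "m < Ma" and lp: "\<forall>t. \<forall>w\<in>space M. \<forall>n<N. 0 < lams m t w n"
  shows "AE w in M. \<exists>C. \<forall>t. 1 / sqrt (W t w m) \<le> C * (\<Prod>s<t. qf m s w)"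
proof -
  define Z where "Z t w = (1 / sqrt (W t w m)) / (\<Prod>s<t. qf m s w)" for t w
  have Wp: "w \<in> space M \<Longrightarrow> 0 < W t w m" for t w using W_pos_agent[OF m lp] .
  have qp: "w \<in> space M \<Longrightarrow> 0 < qf m t w" for t w using qf_pos[OF m] lp by auto
  have Pp: "w \<in> space M \<Longrightarrow> 0 < (\<Prod>s<t. qf m s w)" for t w using qp by (intro prod_pos) auto
  have Zm: "(\<lambda>w. Z t w) \<in> borel_measurable (F t)" for t
  proof -
    have [measurable]: "(\<lambda>w. W t w m) \<in> borel_measurable (F t)" using W_meas[OF m] .
    have [measurable]: "(\<lambda>w. \<Prod>s<t. qf m s w) \<in> borel_measurable (F t)"
      by (intro prod_meas qf_meas m)
    show ?thesis unfolding Z_def by measurable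
  qed
  have Znn: "w \<in> space M \<Longrightarrow> 0 \<le> Z t w" for t w unfolding Z_def using Wp[of w t] Pp[of w t] by (simp add: zero_le_mult_iff)
  have Z0: "w \<in> space M \<Longrightarrow> Z 0 w = 1 / sqrt (W0 m)" for w unfolding Z_def by simp
  have step: "(\<integral>\<^sup>+w. ennreal (Z (Suc t) w) * indicator B w \<partial>M) \<le> (\<integral>\<^sup>+w. ennreal (Z t w) * indicator B w \<partial>M)"
    if B: "B \<in> sets (F t)" for t B
  proof (rule onestep[where G = "\<lambda>w. Z t w / qf m t w" and v = "nus m t" and h = "\<lambda>w n. 1 / sqrt (yv m t w n)"])
    show "Z (Suc t) \<in> borel_measurable M" using meas_M[OF Zm] .
    show "(\<lambda>w. Z t w / qf m t w) \<in> borel_measurable (F t)"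
      using Zm qf_meas[OF m] by (rule borel_measurable_divide)
    show "0 \<le> Z t w / qf m t w" if "w \<in> space M" for w using Znn qp that by (auto intro: divide_nonneg_pos)
    show "nus m t \<in> borel_measurable (F t)" using nus_meas[OF m] .
    show "0 \<le> nus m t w \<and> nus m t w \<le> 1" if "w \<in> space M" for w using nus01[OF m that] .
    show "(\<lambda>w. 1 / sqrt (yv m t w n)) \<in> borel_measurable (F t)" if "n < N" for n
    proof -
      have [measurable]: "(\<lambda>w. yv m t w n) \<in> borel_measurable (F t)" by (intro yv_meas m that)
      show ?thesis by measurable
    qed
    show "0 \<le> 1 / sqrt (yv m t w n)" if "w \<in> space M" "n < N" for w n using yv_nn[OF m that] by simp
    show "B \<in> sets (F t)" using B .
    fix w assume w: "w \<in> space M"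
    let ?R = "(1 - nus m t w) + nus m t w * (\<Sum>n<N. X (Suc t) w n * yv m t w n)"
    have Rp: "0 < ?R" using R_pos[OF m w] lp w by auto
    have J: "1 / sqrt ?R \<le> (1 - nus m t w) + nus m t w * (\<Sum>n<N. X (Suc t) w n * (1 / sqrt (yv m t w n)))"
      by (rule isqrt_jensen) (use nus01[OF m w] X_nonneg[OF w] X_sum[OF w] yv_pos[OF m w] lp w Rp in auto)
    have "Z (Suc t) w = (Z t w / qf m t w) * (1 / sqrt ?R)"
    proof -
      have s1: "sqrt (W t w m * ?R) = sqrt (W t w m) * sqrt ?R" by (rule real_sqrt_mult)
      have p1: "(\<Prod>s<Suc t. qf m s w) = (\<Prod>s<t. qf m s w) * qf m t w" by simp
      have n1: "sqrt (W t w m) \<noteq> 0" using Wp[OF w, of t] by simp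
      have n2: "sqrt ?R \<noteq> 0" using Rp by simp
      have n3: "(\<Prod>s<t. qf m s w) \<noteq> 0" using Pp[OF w, of t] by (metis less_irrefl)
      have n4: "qf m t w \<noteq> 0" using qp[OF w, of t] by simp
      show ?thesis unfolding Z_def W_step'[OF w m] s1 p1 using n1 n2 n3 n4 by (simp add: field_simps)
    qed
    also have "\<dots> \<le> (Z t w / qf m t w) * ((1 - nus m t w) + nus m t w * (\<Sum>n<N. X (Suc t) w n * (1 / sqrt (yv m t w n))))"
      by (rule mult_left_mono[OF J]) (use Znn[OF w] qp[OF w] in \<open>auto intro: divide_nonneg_pos\<close>)
    finally show "Z (Suc t) w \<le> (Z t w / qf m t w) * ((1 - nus m t w) + nus m t w * (\<Sum>n<N. X (Suc t) w n * (1 / sqrt (yv m t w n))))" .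
    have "(Z t w / qf m t w) * ((1 - nus m t w) + nus m t w * (\<Sum>n<N. muT t w n * (1 / sqrt (yv m t w n)))) = Z t w"
      using qp[OF w, of t] unfolding qf_def[symmetric] by (simp add: less_imp_neq[symmetric])
    then show "(Z t w / qf m t w) * ((1 - nus m t w) + nus m t w * (\<Sum>n<N. muT t w n * (1 / sqrt (yv m t w n)))) \<le> Z t w"
      by simp
  qed
  have "AE w in M. \<exists>C. \<forall>t. Z t w \<le> C"
    by (rule supermart_bdd[OF Zm Znn step Z0]) auto
  then show ?thesis
  proof (rule AE_mp[OF _ AE_I2], intro impI)
    fix w assume w: "w \<in> space M" and "\<exists>C. \<forall>t. Z t w \<le> C"
    then obtain C where C: "\<And>t. Z t w \<le> C" by blast
    have "1 / sqrt (W t w m) \<le> C * (\<Prod>s<t. qf m s w)" for t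
    proof -
      from C[of t] have "(1 / sqrt (W t w m)) / (\<Prod>s<t. qf m s w) \<le> C" unfolding Z_def .
      then show ?thesis by (subst (asm) pos_divide_le_eq[OF Pp[OF w, of t]])
    qed
    then show "\<exists>C. \<forall>t. 1 / sqrt (W t w m) \<le> C * (\<Prod>s<t. qf m s w)" by blast
  qed
qed

lemma lin_bound:
  assumes m: "m < Ma"
  shows "AE w in M. \<exists>C. \<forall>t. W t w m \<le> C * (\<Prod>s<t. rf m s w)"
proof -
  define Z where "Z t w = W t w m / (\<Prod>s<t. rf m s w)" for t w
  have Wn: "w \<in> space M \<Longrightarrow> 0 \<le> W t w m" for t w using W_nn m by auto
  have qp: "w \<in> space M \<Longrightarrow> 0 < rf m t w" for t w using rf_pos[OF m] by auto
  have Pp: "w \<in> space M \<Longrightarrow> 0 < (\<Prod>s<t. rf m s w)" for t w using qp by (intro prod_pos) auto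
  have Zm: "(\<lambda>w. Z t w) \<in> borel_measurable (F t)" for t
    unfolding Z_def
    by (intro borel_measurable_divide prod_meas rf_meas W_meas m)
  have Znn: "w \<in> space M \<Longrightarrow> 0 \<le> Z t w" for t w unfolding Z_def using Wn Pp by (auto intro: divide_nonneg_pos)
  have Z0: "w \<in> space M \<Longrightarrow> Z 0 w = W0 m" for w unfolding Z_def by simp
  have step: "(\<integral>\<^sup>+w. ennreal (Z (Suc t) w) * indicator B w \<partial>M) \<le> (\<integral>\<^sup>+w. ennreal (Z t w) * indicator B w \<partial>M)"
    if B: "B \<in> sets (F t)" for t B
  proof (rule onestep[where G = "\<lambda>w. Z t w / rf m t w" and v = "nus m t" and h = "\<lambda>w n. yv m t w n"])
    show "Z (Suc t) \<in> borel_measurable M" using meas_M[OF Zm] .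
    show "(\<lambda>w. Z t w / rf m t w) \<in> borel_measurable (F t)"
      using Zm rf_meas[OF m] by (rule borel_measurable_divide)
    show "0 \<le> Z t w / rf m t w" if "w \<in> space M" for w using Znn qp that by (auto intro: divide_nonneg_pos)
    show "nus m t \<in> borel_measurable (F t)" using nus_meas[OF m] .
    show "0 \<le> nus m t w \<and> nus m t w \<le> 1" if "w \<in> space M" for w using nus01[OF m that] .
    show "(\<lambda>w. yv m t w n) \<in> borel_measurable (F t)" if "n < N" for n
      by (intro yv_meas m that)
    show "0 \<le> yv m t w n" if "w \<in> space M" "n < N" for w n using yv_nn[OF m that] by simp
    show "B \<in> sets (F t)" using B .
    fix w assume w: "w \<in> space M"
    show "Z (Suc t) w \<le> (Z t w / rf m t w) * ((1 - nus m t w) + nus m t w * (\<Sum>n<N. X (Suc t) w n * yv m t w n))"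
    proof -
      have a1: "rf m t w \<noteq> 0" using qp[OF w] by (metis less_irrefl)
      have a2: "(\<Prod>s<t. rf m s w) \<noteq> 0" using Pp[OF w] by (metis less_irrefl)
      show ?thesis unfolding Z_def W_step'[OF w m] using a1 a2 by (simp add: field_simps)
    qed
    have "(Z t w / rf m t w) * ((1 - nus m t w) + nus m t w * (\<Sum>n<N. muT t w n * yv m t w n)) = Z t w"
      using qp[OF w, of t] unfolding rf_def[symmetric] by (simp add: less_imp_neq[symmetric])
    then show "(Z t w / rf m t w) * ((1 - nus m t w) + nus m t w * (\<Sum>n<N. muT t w n * yv m t w n)) \<le> Z t w"
      by simp
  qed
  have "AE w in M. \<exists>C. \<forall>t. Z t w \<le> C"
    by (rule supermart_bdd[OF Zm Znn step Z0]) auto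
  then show ?thesis
  proof (rule AE_mp[OF _ AE_I2], intro impI)
    fix w assume w: "w \<in> space M" and "\<exists>C. \<forall>t. Z t w \<le> C"
    then obtain C where C: "\<And>t. Z t w \<le> C" by blast
    have "W t w m \<le> C * (\<Prod>s<t. rf m s w)" for t
      using C[of t] Pp[OF w, of t] unfolding Z_def by (simp add: divide_le_eq)
    then show "\<exists>C. \<forall>t. W t w m \<le> C * (\<Prod>s<t. rf m s w)" by blast
  qed
qed

end


lemma term_uv:
  fixes mu l b :: real
  assumes l: "0 < l" and b: "0 < b"
  shows "mu * (1 / sqrt (l / b)) = sqrt b * (mu / sqrt l)"
  using l b by (simp add: real_sqrt_divide field_simps)

lemma term1:
  fixes mu l b :: real
  assumes l: "0 < l" and b: "0 < b"
  shows "mu * (1 / sqrt (l / b)) \<le> (mu^2 / l + b) / 2"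
proof -
  define u where "u = sqrt b"
  define v where "v = mu / sqrt l"
  have "u * v = (u^2 + v^2 - (u - v)^2) / 2" by (simp add: power2_eq_square algebra_simps)
  also have "\<dots> \<le> (u^2 + v^2) / 2" by simp
  also have "u^2 = b" unfolding u_def using b by simp
  also have "v^2 = mu^2 / l" unfolding v_def using l by (simp add: power_divide)
  finally show ?thesis unfolding term_uv[OF l b] u_def v_def by (simp add: add.commute)
qed

lemma term3:
  fixes mu l b c :: real
  assumes c: "0 < c" "c \<le> l" and mu: "0 < mu" "mu \<le> 1" and b: "0 < b" "b \<le> 1"
  shows "mu * (1 / sqrt (l / b)) \<le> (mu^2 / l + b) / 2 - (b - mu)^2 / 16 + (mu - l)^2 / (2 * c)"
proof -
  have l: "0 < l" using c by simp
  define u where "u = sqrt b"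
  define v where "v = mu / sqrt l"
  define p where "p = sqrt mu"
  define s where "s = sqrt l"
  have s: "0 < s" using l by (simp add: s_def)
  have p: "0 < p" "p \<le> 1" using mu by (auto simp: p_def)
  have u: "0 < u" "u \<le> 1" using b by (auto simp: u_def)
  have ss: "s^2 = l" using l by (simp add: s_def)
  have pp: "p^2 = mu" using mu by (simp add: p_def)
  have uu: "u^2 = b" using b by (simp add: u_def)
  have h2: "u * v = (u^2 + v^2 - (u - v)^2) / 2" by (simp add: power2_eq_square algebra_simps)
  have vv: "v^2 = mu^2 / l" unfolding v_def using l by (simp add: power_divide)
  have h3: "(b - mu)^2 \<le> 4 * (u - p)^2"
  proof -
    have "b - mu = (u - p) * (u + p)" using uu pp by (simp add: power2_eq_square algebra_simps)
    then have "(b - mu)^2 = (u - p)^2 * (u + p)^2" by (simp add: power_mult_distrib)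
    also have "\<dots> \<le> (u - p)^2 * 4"
      apply (rule mult_left_mono) using u p power_mono[of "u+p" 2 2] by auto
    finally show ?thesis by simp
  qed
  have h4: "(v - p)^2 \<le> (mu - l)^2 / c"
  proof -
    have "v - p = p * (p - s) / s" unfolding v_def s_def[symmetric] using s pp
      by (simp add: field_simps power2_eq_square)
    then have "(v - p)^2 = p^2 * (p - s)^2 / s^2" by (simp add: power_mult_distrib power_divide)
    also have "\<dots> \<le> (p + s)^2 * (p - s)^2 / s^2"
      apply (intro divide_right_mono mult_right_mono) using p s by (auto intro!: power_mono)
    also have "(p + s)^2 * (p - s)^2 = (mu - l)^2" using pp ss by (simp add: power2_eq_square algebra_simps)
    also have "(mu - l)^2 / s^2 \<le> (mu - l)^2 / c" unfolding ss
      by (rule divide_left_mono) (use c in auto)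
    finally show ?thesis .
  qed
  have h5: "(u - p)^2 \<le> 2 * (u - v)^2 + 2 * (v - p)^2"
    using sum_squares_ge_zero[of "u - v - (v - p)" 0] by (simp add: power2_eq_square algebra_simps)
  have "mu * (1 / sqrt (l / b)) = u * v" unfolding term_uv[OF l b(1)] u_def v_def ..
  also have "\<dots> \<le> (mu^2 / l + b) / 2 - (b - mu)^2 / 16 + (mu - l)^2 / (2 * c)"
    unfolding h2 uu vv using h3 h4 h5 by (simp add: field_simps)
  finally show ?thesis .
qed


context prof begin

lemma sumsq_id:
  assumes w: "w \<in> space M" and m: "m < Ma" and lp: "\<And>n. n < N \<Longrightarrow> 0 < lams m t w n"
  shows "(\<Sum>n<N. (muT t w n)^2 / lams m t w n) = 1 + (\<Sum>n<N. (muT t w n - lams m t w n)^2 / lams m t w n)"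
proof -
  have "(\<Sum>n<N. (muT t w n - lams m t w n)^2 / lams m t w n)
      = (\<Sum>n<N. (muT t w n)^2 / lams m t w n - 2 * muT t w n + lams m t w n)"
  proof (rule sum.cong[OF refl])
    fix n assume "n \<in> {..<N}"
    then have "lams m t w n \<noteq> 0" using lp by (metis lessThan_iff less_irrefl)
    then show "(muT t w n - lams m t w n)^2 / lams m t w n = (muT t w n)^2 / lams m t w n - 2 * muT t w n + lams m t w n"
      by (simp add: power2_eq_square field_simps)
  qed
  also have "\<dots> = (\<Sum>n<N. (muT t w n)^2 / lams m t w n) - 2 * (\<Sum>n<N. muT t w n) + (\<Sum>n<N. lams m t w n)"
    by (simp add: sum.distrib sum_subtractf sum_distrib_left)
  finally show ?thesis using muT_sum lams_sum[OF m w] by simp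
qed

lemma qf_le1:
  assumes w: "w \<in> space M" and m: "m < Ma" and lp: "\<And>n. n < N \<Longrightarrow> 0 < lams m t w n"
  shows "qf m t w \<le> 1 + (\<Sum>n<N. (muT t w n - lams m t w n)^2 / lams m t w n) / 2"
proof -
  define d where "d = (\<Sum>n<N. (muT t w n - lams m t w n)^2 / lams m t w n)"
  have dnn: "0 \<le> d" unfolding d_def by (intro sum_nonneg divide_nonneg_pos) (use lp in auto)
  have "(\<Sum>n<N. muT t w n * (1 / sqrt (yv m t w n))) \<le> (\<Sum>n<N. ((muT t w n)^2 / lams m t w n + lb t w n) / 2)"
    unfolding yv_def by (rule sum_mono) (rule term1, use lp lb_pos w in auto)
  also have "\<dots> = ((\<Sum>n<N. (muT t w n)^2 / lams m t w n) + (\<Sum>n<N. lb t w n)) / 2"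
    by (simp add: sum.distrib sum_divide_distrib[symmetric])
  also have "\<dots> = 1 + d / 2" using sumsq_id[OF w m lp] lb_sum[OF w] unfolding d_def by simp
  finally have S: "(\<Sum>n<N. muT t w n * (1 / sqrt (yv m t w n))) \<le> 1 + d / 2" .
  have v: "0 \<le> nus m t w" "nus m t w \<le> 1" using nus01[OF m w] by auto
  have "qf m t w = 1 + nus m t w * ((\<Sum>n<N. muT t w n * (1 / sqrt (yv m t w n))) - 1)"
    unfolding qf_def by (simp add: algebra_simps)
  also have "\<dots> \<le> 1 + nus m t w * (d / 2)"
  proof -
    have "(\<Sum>n<N. muT t w n * (1 / sqrt (yv m t w n))) - 1 \<le> d / 2" using S by simp
    from mult_left_mono[OF this v(1)] show ?thesis by simp
  qed
  also have "\<dots> \<le> 1 + d / 2" using v dnn by (simp add: mult_left_le_one_le)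
  finally show ?thesis unfolding d_def .
qed

lemma qf_le3:
  assumes w: "w \<in> space M" and m: "m < Ma" and c: "0 < c" "c \<le> nus m t w" and lc: "\<And>n. n < N \<Longrightarrow> c \<le> lams m t w n"
  shows "qf m t w \<le> 1 + (\<Sum>n<N. (muT t w n - lams m t w n)^2) / c - c * (\<Sum>n<N. (lb t w n - muT t w n)^2) / 16"
proof -
  define e where "e = (\<Sum>n<N. (muT t w n - lams m t w n)^2)"
  define f where "f = (\<Sum>n<N. (lb t w n - muT t w n)^2)"
  have lp: "n < N \<Longrightarrow> 0 < lams m t w n" for n using lc c by (meson less_le_trans)
  have enn: "0 \<le> e" and fnn: "0 \<le> f" unfolding e_def f_def by (auto intro: sum_nonneg)
  have "(\<Sum>n<N. muT t w n * (1 / sqrt (yv m t w n))) \<le>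
      (\<Sum>n<N. ((muT t w n)^2 / lams m t w n + lb t w n) / 2 - (lb t w n - muT t w n)^2 / 16 + (muT t w n - lams m t w n)^2 / (2 * c))"
    unfolding yv_def by (rule sum_mono) (rule term3, use lp lb_pos lb_le1 muT_pos muT_le1 w c lc in auto)
  also have "\<dots> = ((\<Sum>n<N. (muT t w n)^2 / lams m t w n) + (\<Sum>n<N. lb t w n)) / 2 - f / 16 + e / (2 * c)"
    unfolding e_def f_def by (simp add: sum.distrib sum_subtractf sum_divide_distrib[symmetric])
  also have "\<dots> = (2 + (\<Sum>n<N. (muT t w n - lams m t w n)^2 / lams m t w n)) / 2 - f / 16 + e / (2 * c)"
    using sumsq_id[OF w m lp] lb_sum[OF w] by simp
  finally have S1: "(\<Sum>n<N. muT t w n * (1 / sqrt (yv m t w n))) \<le> (2 + (\<Sum>n<N. (muT t w n - lams m t w n)^2 / lams m t w n)) / 2 - f / 16 + e / (2 * c)" .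
  have X: "(\<Sum>n<N. (muT t w n - lams m t w n)^2 / lams m t w n) \<le> e / c"
    unfolding e_def sum_divide_distrib
    by (rule sum_mono) (rule divide_left_mono, use lc c lp in \<open>auto intro: mult_pos_pos\<close>)
  have h: "e / (2 * c) = (e / c) / 2" by simp
  have la: "\<And>S X E f :: real. S \<le> (2 + X) / 2 - f / 16 + E / 2 \<Longrightarrow> X \<le> E \<Longrightarrow> S - 1 \<le> E - f / 16"
    by (simp add: field_simps)
  have S: "(\<Sum>n<N. muT t w n * (1 / sqrt (yv m t w n))) - 1 \<le> e / c - f / 16"
    by (rule la[OF S1[unfolded h] X])
  have v: "c \<le> nus m t w" "nus m t w \<le> 1" using nus01[OF m w] c by auto
  have "qf m t w = 1 + nus m t w * ((\<Sum>n<N. muT t w n * (1 / sqrt (yv m t w n))) - 1)"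
    unfolding qf_def by (simp add: algebra_simps)
  also have "\<dots> \<le> 1 + nus m t w * (e / c - f / 16)"
  proof -
    have "0 \<le> nus m t w" using v c by linarith
    from mult_left_mono[OF S this] show ?thesis by simp
  qed
  also have "\<dots> \<le> 1 + e / c - c * f / 16"
  proof -
    have "0 \<le> e / c" using enn c by simp
    then have "nus m t w * (e / c) \<le> e / c" using v c by (intro mult_left_le_one_le) auto
    moreover have "c * f \<le> nus m t w * f" using v fnn by (simp add: mult_right_mono)
    ultimately show ?thesis by (simp add: algebra_simps)
  qed
  finally show ?thesis unfolding e_def f_def .
qed

end


lemma prod_le_exp:
  fixes q x :: "nat \<Rightarrow> real"
  assumes "\<And>s. s < t \<Longrightarrow> 0 \<le> q s \<and> q s \<le> 1 + x s"
  shows "(\<Prod>s<t. q s) \<le> exp (\<Sum>s<t. x s)"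
proof -
  have "(\<Prod>s<t. q s) \<le> (\<Prod>s<t. exp (x s))"
    apply (rule prod_mono)
    using assms exp_ge_add_one_self order_trans by (metis add.commute lessThan_iff)
  also have "\<dots> = exp (\<Sum>s<t. x s)" by (simp add: exp_sum)
  finally show ?thesis .
qed

context prof begin

lemma part1_core:
  assumes m: "m < Ma" and lp: "\<forall>t. \<forall>w\<in>space M. \<forall>n<N. 0 < lams m t w n"
    and sm: "AE w in M. summable (\<lambda>t. \<Sum>n<N. (lams m t w n - mu M F X t w n)^2)"
  shows "AE w in M. 0 < liminf (\<lambda>t. ereal (W t w m))"
  using sqrt_bound[OF m lp] AE_good sm AE_space
proof eventually_elim
  case (elim w)
  then obtain C where C: "\<And>t. 1 / sqrt (W t w m) \<le> C * (\<Prod>s<t. qf m s w)" by blast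
  have w: "w \<in> space M" using elim by simp
  have gd: "\<And>t. good t w" using elim by simp
  define e where "e t = (\<Sum>n<N. (lams m t w n - muT t w n)^2)" for t
  define d where "d t = (\<Sum>n<N. (muT t w n - lams m t w n)^2 / lams m t w n)" for t
  have e_eq: "e t = (\<Sum>n<N. (lams m t w n - mu M F X t w n)^2)" for t
    unfolding e_def using good_muT[OF gd] by simp
  have se: "summable e" unfolding e_eq[abs_def] using elim by simp
  have enn: "0 \<le> e t" for t unfolding e_def by (auto intro: sum_nonneg)
  have dnn: "0 \<le> d t" for t unfolding d_def using lp w by (auto intro!: sum_nonneg divide_nonneg_pos)
  have e0: "e \<longlonglongrightarrow> 0" using summable_LIMSEQ_zero[OF se] .
  have ev: "eventually (\<lambda>t. e t < (eps / 2)^2) sequentially"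
    using order_tendstoD(2)[OF e0, of "(eps/2)^2"] eps_pos by simp
  have evd: "eventually (\<lambda>t. norm (d t) \<le> (2 / eps) * e t) sequentially"
    using ev
  proof eventually_elim
    case (elim t)
    have "d t \<le> (\<Sum>n<N. (2 / eps) * (lams m t w n - muT t w n)^2)"
      unfolding d_def
    proof (rule sum_mono)
      fix n assume n: "n \<in> {..<N}"
      have "(lams m t w n - muT t w n)^2 \<le> e t"
        unfolding e_def by (rule member_le_sum) (use n in auto)
      then have "(lams m t w n - muT t w n)^2 < (eps / 2)^2" using elim by simp
      then have "sqrt ((lams m t w n - muT t w n)^2) < sqrt ((eps / 2)^2)"
        by (rule real_sqrt_less_mono)
      then have "\<bar>lams m t w n - muT t w n\<bar> < eps / 2" using eps_pos by simp
      moreover have "eps \<le> muT t w n" using good_ge[OF gd] n by simp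
      ultimately have lge: "eps / 2 \<le> lams m t w n" by linarith
      have "(muT t w n - lams m t w n)^2 / lams m t w n \<le> (muT t w n - lams m t w n)^2 / (eps / 2)"
        by (rule divide_left_mono) (use lge eps_pos in auto)
      also have "\<dots> = (2 / eps) * (lams m t w n - muT t w n)^2" by (simp add: power2_commute)
      finally show "(muT t w n - lams m t w n)^2 / lams m t w n \<le> (2 / eps) * (lams m t w n - muT t w n)^2" .
    qed
    also have "\<dots> = (2 / eps) * e t" unfolding e_def by (simp add: sum_distrib_left)
    finally show ?case using dnn[of t] by simp
  qed
  have sd: "summable d"
    by (rule summable_comparison_test_ev[OF evd]) (use se in \<open>simp add: summable_mult\<close>)
  define E where "E = exp (suminf d / 2)"
  have Epos: "0 < E" unfolding E_def by simp
  have Pb: "(\<Prod>s<t. qf m s w) \<le> E" for t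
  proof -
    have "(\<Prod>s<t. qf m s w) \<le> exp (\<Sum>s<t. d s / 2)"
    proof (rule prod_le_exp)
      fix s assume "s < t"
      have lps: "\<And>n. n < N \<Longrightarrow> 0 < lams m s w n" using lp w by auto
      show "0 \<le> qf m s w \<and> qf m s w \<le> 1 + d s / 2"
        using qf_pos[OF m w lps] qf_le1[OF w m lps] unfolding d_def by auto
    qed
    also have "\<dots> \<le> E" unfolding E_def
      using sum_le_suminf[OF summable_divide[OF sd, of 2], of "{..<t}"] dnn suminf_divide[OF sd, of 2] by simp
    finally show ?thesis .
  qed
  define K where "K = max C 0 * E + 1"
  have Kpos: "0 < K" unfolding K_def using Epos by (simp add: add_nonneg_pos)
  have Wp: "0 < W t w m" for t using W_pos_agent[OF m lp w] .
  have Wb: "1 / K^2 \<le> W t w m" for t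
  proof -
    have "1 / sqrt (W t w m) \<le> K"
    proof -
      have "C * (\<Prod>s<t. qf m s w) \<le> max C 0 * E"
      proof (cases "C \<ge> 0")
        case True
        then show ?thesis using Pb[of t] by (simp add: mult_left_mono)
      next
        case False
        have "0 \<le> (\<Prod>s<t. qf m s w)" using qf_pos[OF m w] lp w by (intro prod_nonneg) (auto intro: less_imp_le)
        then have "C * (\<Prod>s<t. qf m s w) \<le> 0" using False by (simp add: mult_nonpos_nonneg)
        moreover have "max C 0 = 0" using False by simp
        ultimately show ?thesis by simp
      qed
      then show ?thesis using C[of t] unfolding K_def by linarith
    qed
    then have "1 / K \<le> sqrt (W t w m)" using Wp[of t] Kpos by (simp add: field_simps)
    then have "(1 / K)^2 \<le> (sqrt (W t w m))^2" by (rule power_mono) (use Kpos in simp)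
    then show ?thesis using Wp[of t] by (simp add: power_divide)
  qed
  have "ereal (1 / K^2) \<le> liminf (\<lambda>t. ereal (W t w m))"
    by (rule Liminf_bounded) (use Wb in auto)
  moreover have "0 < ereal (1 / K^2)" using Kpos by simp
  ultimately show ?case by order
qed

end


context prof begin

lemma part3_core:
  assumes m: "m < Ma" and c: "0 < c"
    and cb: "\<forall>t. \<forall>w\<in>space M. c \<le> nus m t w \<and> (\<forall>n<N. c \<le> lams m t w n)"
    and sm: "AE w in M. summable (\<lambda>t. \<Sum>n<N. (lams m t w n - mu M F X t w n)^2)"
  shows "AE w in M. summable (\<lambda>t. \<Sum>n<N. (lb t w n - mu M F X t w n)^2)"
proof -
  have lp: "\<forall>t. \<forall>w\<in>space M. \<forall>n<N. 0 < lams m t w n" using cb c by (meson less_le_trans)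
  show ?thesis
  using sqrt_bound[OF m lp] AE_good sm AE_space
  proof eventually_elim
    case (elim w)
    then obtain C where C: "\<And>t. 1 / sqrt (W t w m) \<le> C * (\<Prod>s<t. qf m s w)" by blast
    have w: "w \<in> space M" using elim by simp
    have gd: "\<And>t. good t w" using elim by simp
    define e where "e t = (\<Sum>n<N. (muT t w n - lams m t w n)^2)" for t
    define f where "f t = (\<Sum>n<N. (lb t w n - muT t w n)^2)" for t
    have e_eq: "e t = (\<Sum>n<N. (lams m t w n - mu M F X t w n)^2)" for t
      unfolding e_def using good_muT[OF gd] by (simp add: power2_commute)
    have se: "summable e" unfolding e_eq[abs_def] using elim by simp
    have enn: "0 \<le> e t" for t unfolding e_def by (auto intro: sum_nonneg)
    have fnn: "0 \<le> f t" for t unfolding f_def by (auto intro: sum_nonneg)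
    have lps: "\<And>t n. n < N \<Longrightarrow> 0 < lams m t w n" using lp w by auto
    have qb: "(\<Prod>s<t. qf m s w) \<le> exp (suminf e / c - c * (\<Sum>s<t. f s) / 16)" for t
    proof -
      have "(\<Prod>s<t. qf m s w) \<le> exp (\<Sum>s<t. e s / c - c * f s / 16)"
      proof (rule prod_le_exp)
        fix s assume "s < t"
        show "0 \<le> qf m s w \<and> qf m s w \<le> 1 + (e s / c - c * f s / 16)"
          using qf_pos[OF m w lps] qf_le3[OF w m c, of s] cb w unfolding e_def f_def
          by (auto intro: less_imp_le)
      qed
      also have "(\<Sum>s<t. e s / c - c * f s / 16) = (\<Sum>s<t. e s) / c - c * (\<Sum>s<t. f s) / 16"
        by (simp add: sum_subtractf sum_divide_distrib sum_distrib_left)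
      also have "\<dots> \<le> suminf e / c - c * (\<Sum>s<t. f s) / 16"
        using sum_le_suminf[OF se, of "{..<t}"] enn c by (simp add: divide_right_mono)
      finally show ?thesis by simp
    qed
    have bnd: "(\<Sum>s<t. f s) \<le> 16 / c * (suminf e / c + ln C)" and Cpos: "0 < C" for t
    proof -
      have Wp: "0 < W t w m" using W_pos_agent[OF m lp w] .
      have "1 \<le> 1 / sqrt (W t w m)" using Wp W_le1[OF w m, of t] by (simp add: real_sqrt_le_1_iff)
      also note C[of t]
      finally have one: "1 \<le> C * (\<Prod>s<t. qf m s w)" .
      have Pp: "0 < (\<Prod>s<t. qf m s w)" using qf_pos[OF m w lps] by (intro prod_pos) auto
      show Cp: "0 < C"
      proof (rule ccontr)
        assume "\<not> 0 < C"
        then have "C * (\<Prod>s<t. qf m s w) \<le> 0" using Pp by (simp add: mult_nonpos_nonneg)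
        then show False using one by simp
      qed
      have "1 \<le> C * exp (suminf e / c - c * (\<Sum>s<t. f s) / 16)"
        using order_trans[OF one mult_left_mono[OF qb[of t], of C]] Cp by simp
      then have "exp (- ln C) \<le> exp (suminf e / c - c * (\<Sum>s<t. f s) / 16)"
        using Cp by (simp add: exp_minus field_simps)
      then have "- ln C \<le> suminf e / c - c * (\<Sum>s<t. f s) / 16" by simp
      then have "c * (\<Sum>s<t. f s) \<le> 16 * (suminf e / c + ln C)" by simp
      then show "(\<Sum>s<t. f s) \<le> 16 / c * (suminf e / c + ln C)"
        using c by (simp add: field_simps)
    qed
    have sf: "summable f"
      by (rule summableI_nonneg_bounded[OF fnn bnd])
    have "f = (\<lambda>t. \<Sum>n<N. (lb t w n - mu M F X t w n)^2)"
      unfolding f_def using good_muT[OF gd] by simp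
    then show ?case using sf by simp
  qed
qed

end


lemma liminf_pos_ev:
  fixes g :: "nat \<Rightarrow> real"
  assumes "0 < liminf (\<lambda>t. ereal (g t))"
  shows "\<exists>\<delta>>0. \<exists>T. \<forall>t\<ge>T. \<delta> \<le> g t"
proof -
  obtain z where z: "0 < z" "z < liminf (\<lambda>t. ereal (g t))" using dense[OF assms] by blast
  then have "z \<noteq> \<infinity>" "z \<noteq> -\<infinity>" by auto
  then obtain d where d: "z = ereal d" by (cases z) auto
  have "eventually (\<lambda>t. z < ereal (g t)) sequentially" using less_LiminfD[OF z(2)] .
  then obtain T where "\<forall>t\<ge>T. z < ereal (g t)" unfolding eventually_sequentially by blast
  then have "\<forall>t\<ge>T. d \<le> g t" using d by (auto intro: less_imp_le)
  moreover have "0 < d" using z d by simp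
  ultimately show ?thesis by blast
qed

lemma kelly_gap:
  fixes lam mu lb :: "nat \<Rightarrow> real" and a :: real
  assumes ls: "(\<Sum>n<K. lam n) = 1" and ms: "(\<Sum>n<K. mu n) = 1"
    and lbd: "\<And>n. n < K \<Longrightarrow> lb n = a * lam n + (1 - a) * mu n"
    and lbp: "\<And>n. n < K \<Longrightarrow> 0 < lb n"
  shows "1 - (\<Sum>n<K. mu n * (lam n / lb n)) = a * (1 - a) * (\<Sum>n<K. (lam n - mu n)^2 / lb n)"
proof -
  have tm: "mu n * (lam n / lb n) = lb n - a * (1 - a) * ((lam n - mu n)^2 / lb n) - ((2 * a - 1) * lam n - (2 * a - 1) * mu n)"
    if n: "n < K" for n
  proof -
    have p: "lb n \<noteq> 0" using lbp[OF n] by simp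
    show ?thesis using p unfolding lbd[OF n]
      by (simp add: field_simps power2_eq_square)
  qed
  have "(\<Sum>n<K. mu n * (lam n / lb n)) = (\<Sum>n<K. lb n) - a * (1 - a) * (\<Sum>n<K. (lam n - mu n)^2 / lb n)
        - ((2 * a - 1) * (\<Sum>n<K. lam n) - (2 * a - 1) * (\<Sum>n<K. mu n))"
  proof -
    have "(\<Sum>n<K. mu n * (lam n / lb n)) = (\<Sum>n<K. lb n - a * (1 - a) * ((lam n - mu n)^2 / lb n) - ((2 * a - 1) * lam n - (2 * a - 1) * mu n))"
      by (rule sum.cong[OF refl], rule tm, simp)
    also have "\<dots> = (\<Sum>n<K. lb n) - a * (1 - a) * (\<Sum>n<K. (lam n - mu n)^2 / lb n)
        - ((2 * a - 1) * (\<Sum>n<K. lam n) - (2 * a - 1) * (\<Sum>n<K. mu n))"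
      by (simp only: sum_subtractf sum_distrib_left[symmetric])
    finally show ?thesis .
  qed
  also have "(\<Sum>n<K. lb n) = a * (\<Sum>n<K. lam n) + (1 - a) * (\<Sum>n<K. mu n)"
    by (simp add: lbd sum.distrib sum_distrib_left)
  finally show ?thesis using ls ms by simp
qed


lemma x_le_div: "0 \<le> (x::real) \<Longrightarrow> 0 < b \<Longrightarrow> b \<le> 1 \<Longrightarrow> x \<le> x / b"
  using mult_right_le_one_le[of x b] by (simp add: le_divide_eq)

context prof begin

lemma gap2:
  assumes Ma2: "Ma = 2" and nu1: "\<And>t w. nus 1 t w = 1" and lam1: "\<And>t w. lams 1 t w = muT t w"
    and w: "w \<in> space M"
  shows "nus 0 t w * (nus 0 t w * W t w 0) * W t w 1 * (\<Sum>n<N. (lams 0 t w n - muT t w n)^2) \<le> 1 - rf 0 t w"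
proof -
  define v where "v = nus 0 t w"
  define A where "A = W t w 0"
  define B where "B = W t w 1"
  define nbv where "nbv = nb t w"
  have m0: "0 < Ma" "1 < Ma" using Ma2 by auto
  have v: "0 \<le> v" "v \<le> 1" using nus01[OF m0(1) w] unfolding v_def by auto
  have A: "0 \<le> A" and B: "0 \<le> B" unfolding A_def B_def using W_nn[OF w] m0 by auto
  have nbe: "nbv = v * A + B" unfolding nbv_def nb_eq v_def A_def B_def using Ma2 nu1
    by (simp add: numeral_2_eq_2)
  have nbp: "0 < nbv" and nb1: "nbv \<le> 1" unfolding nbv_def using nb_pos[OF w] nb_le1[OF w] by auto
  define a where "a = v * A / nbv"
  have a1: "1 - a = B / nbv" unfolding a_def using nbp nbe by (simp add: field_simps)
  have lbd: "lb t w n = a * lams 0 t w n + (1 - a) * muT t w n" if "n < N" for n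
  proof -
    have "D t w n = v * lams 0 t w n * A + muT t w n * B"
      unfolding v_def A_def B_def using Ma2 nu1 lam1 by (simp add: numeral_2_eq_2)
    then show ?thesis unfolding lb_eq a1 nbv_def[symmetric] unfolding a_def using nbp
      by (simp add: field_simps)
  qed
  have kg: "1 - (\<Sum>n<N. muT t w n * (lams 0 t w n / lb t w n)) = a * (1 - a) * (\<Sum>n<N. (lams 0 t w n - muT t w n)^2 / lb t w n)"
    by (rule kelly_gap[OF lams_sum[OF m0(1) w] muT_sum lbd lb_pos[OF w]])
  have "1 - rf 0 t w = v * (1 - (\<Sum>n<N. muT t w n * (lams 0 t w n / lb t w n)))"
    unfolding rf_def yv_def v_def by (simp add: algebra_simps)
  also have "\<dots> = v * (a * (1 - a) * (\<Sum>n<N. (lams 0 t w n - muT t w n)^2 / lb t w n))" unfolding kg ..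
  finally have eq: "1 - rf 0 t w = v * (a * (1 - a) * (\<Sum>n<N. (lams 0 t w n - muT t w n)^2 / lb t w n))" .
  have ea: "(\<Sum>n<N. (lams 0 t w n - muT t w n)^2) \<le> (\<Sum>n<N. (lams 0 t w n - muT t w n)^2 / lb t w n)"
    by (rule sum_mono) (rule x_le_div, use lb_pos[OF w] lb_le1[OF w] in auto)
  have enn: "0 \<le> (\<Sum>n<N. (lams 0 t w n - muT t w n)^2)" by (auto intro: sum_nonneg)
  have aA: "v * A \<le> a" unfolding a_def by (rule x_le_div) (use v A nbp nb1 in auto)
  have a0: "0 \<le> a" using aA v A by (meson mult_nonneg_nonneg order_trans)
  have aB: "B \<le> 1 - a" unfolding a1 by (rule x_le_div) (use B nbp nb1 in auto)
  have "v * (v * A) * B * (\<Sum>n<N. (lams 0 t w n - muT t w n)^2) \<le> v * (a * (1 - a) * (\<Sum>n<N. (lams 0 t w n - muT t w n)^2 / lb t w n))"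
  proof -
    have "(v * A) * B \<le> a * (1 - a)"
      by (rule mult_mono[OF aA aB]) (use v A B a0 in auto)
    then have "(v * A) * B * (\<Sum>n<N. (lams 0 t w n - muT t w n)^2) \<le> a * (1 - a) * (\<Sum>n<N. (lams 0 t w n - muT t w n)^2 / lb t w n)"
      by (rule mult_mono[OF _ ea]) (use v A B a0 aB enn in auto)
    then show ?thesis using v by (simp add: mult_left_mono mult.assoc)
  qed
  then show ?thesis unfolding eq v_def A_def B_def .
qed

lemma part2_core:
  assumes Ma2: "Ma = 2" and nu1: "\<And>t w. nus 1 t w = 1" and lam1: "\<And>t w. lams 1 t w = muT t w"
    and lp0: "\<forall>t. \<forall>w\<in>space M. \<forall>n<N. 0 < lams 0 t w n"
    and c: "0 < c" and cb: "\<forall>t. \<forall>w\<in>space M. c \<le> nus 0 t w"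
    and surv0: "AE w in M. 0 < liminf (\<lambda>t. ereal (W t w 0))"
  shows "AE w in M. summable (\<lambda>t. \<Sum>n<N. (lams 0 t w n - mu M F X t w n)^2)"
proof -
  have m1: "1 < Ma" and m0: "0 < Ma" using Ma2 by auto
  have surv1: "AE w in M. 0 < liminf (\<lambda>t. ereal (W t w 1))"
  proof (rule part1_core[OF m1])
    show "\<forall>t. \<forall>w\<in>space M. \<forall>n<N. 0 < lams 1 t w n" using muT_pos lam1 by simp
    show "AE w in M. summable (\<lambda>t. \<Sum>n<N. (lams 1 t w n - mu M F X t w n)^2)"
      using AE_good
    proof eventually_elim
      case (elim w)
      then have "(\<lambda>t. \<Sum>n<N. (lams 1 t w n - mu M F X t w n)^2) = (\<lambda>t. 0)"
        using lam1 good_muT by simp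
      then show ?case by simp
    qed
  qed
  show ?thesis using lin_bound[OF m0] AE_good surv0 surv1 AE_space
  proof eventually_elim
    case (elim w)
    then obtain C where C: "\<And>t. W t w 0 \<le> C * (\<Prod>s<t. rf 0 s w)" by blast
    have w: "w \<in> space M" using elim by simp
    have gd: "\<And>t. good t w" using elim by simp
    obtain d0 T0 where d0: "0 < d0" "\<And>t. t \<ge> T0 \<Longrightarrow> d0 \<le> W t w 0"
      using liminf_pos_ev[of "\<lambda>t. W t w 0"] elim by blast
    obtain d1 T1 where d1: "0 < d1" "\<And>t. t \<ge> T1 \<Longrightarrow> d1 \<le> W t w 1"
      using liminf_pos_ev[of "\<lambda>t. W t w 1"] elim by blast
    define T where "T = max T0 T1"
    define e where "e t = (\<Sum>n<N. (lams 0 t w n - muT t w n)^2)" for t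
    have enn: "0 \<le> e t" for t unfolding e_def by (auto intro: sum_nonneg)
    define k where "k = c * (c * d0) * d1"
    have kp: "0 < k" unfolding k_def using c d0 d1 by simp
    define g where "g s = (if T \<le> s then k * e s else 0)" for s
    have gnn: "0 \<le> g s" for s unfolding g_def using kp enn by auto
    have Wn: "0 \<le> W t w j" if "j < Ma" for t j using W_nn[OF w that] .
    have rfb: "0 \<le> rf 0 s w \<and> rf 0 s w \<le> 1 + - g s" for s
    proof -
      have gp: "nus 0 s w * (nus 0 s w * W s w 0) * W s w 1 * e s \<le> 1 - rf 0 s w"
        unfolding e_def by (rule gap2[OF Ma2 nu1 lam1 w])
      have v: "c \<le> nus 0 s w" using cb w by auto
      have gg: "g s \<le> nus 0 s w * (nus 0 s w * W s w 0) * W s w 1 * e s"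
      proof (cases "T \<le> s")
        case True
        have "c * (c * d0) * d1 \<le> nus 0 s w * (nus 0 s w * W s w 0) * W s w 1"
          apply (intro mult_mono)
          using v c d0 d1 True Wn m0 m1 unfolding T_def by auto
        then show ?thesis unfolding g_def k_def using True enn[of s] by (simp add: mult_right_mono)
      next
        case False
        have "0 \<le> nus 0 s w * (nus 0 s w * W s w 0) * W s w 1 * e s"
          using v c Wn m0 m1 enn by (intro mult_nonneg_nonneg) auto
        then show ?thesis unfolding g_def using False by simp
      qed
      show ?thesis using gp gg rf_pos[OF m0 w, of s] by auto
    qed
    have Pb: "(\<Prod>s<t. rf 0 s w) \<le> exp (- (\<Sum>s<t. g s))" for t
      using prod_le_exp[of t "\<lambda>s. rf 0 s w" "\<lambda>s. - g s"] rfb by (simp add: sum_negf)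
    have Cb: "0 < C \<and> (\<Sum>s<t. g s) \<le> ln C - ln d0" if "T \<le> t" for t
    proof -
      have "d0 \<le> W t w 0" using d0 that unfolding T_def by auto
      also have "\<dots> \<le> C * (\<Prod>s<t. rf 0 s w)" using C .
      finally have h: "d0 \<le> C * (\<Prod>s<t. rf 0 s w)" .
      have Pp: "0 < (\<Prod>s<t. rf 0 s w)" using rf_pos[OF m0 w] by (intro prod_pos) auto
      have Cp: "0 < C"
      proof (rule ccontr)
        assume "\<not> 0 < C"
        then have "C * (\<Prod>s<t. rf 0 s w) \<le> 0" using Pp by (simp add: mult_nonpos_nonneg)
        then show False using h d0 by simp
      qed
      have "d0 \<le> C * exp (- (\<Sum>s<t. g s))"
        using order_trans[OF h mult_left_mono[OF Pb[of t], of C]] Cp by simp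
      then have "ln d0 \<le> ln (C * exp (- (\<Sum>s<t. g s)))" using d0 by simp
      also have "\<dots> = ln C - (\<Sum>s<t. g s)" using Cp by (simp add: ln_mult)
      finally show ?thesis using Cp by simp
    qed
    have gb: "(\<Sum>s<t. g s) \<le> ln C - ln d0" for t
    proof (cases "T \<le> t")
      case True then show ?thesis using Cb by blast
    next
      case False
      have "(\<Sum>s<t. g s) \<le> (\<Sum>s<T. g s)"
        by (rule sum_mono2) (use False gnn in auto)
      also have "\<dots> \<le> ln C - ln d0" using Cb[of T] by simp
      finally show ?thesis .
    qed
    have sg: "summable g" by (rule summableI_nonneg_bounded[OF gnn gb])
    have ev: "eventually (\<lambda>t. norm (e t) \<le> g t / k) sequentially"
      unfolding eventually_sequentially
      by (rule exI[of _ T]) (use enn kp in \<open>auto simp: g_def\<close>)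
    have se: "summable e"
      by (rule summable_comparison_test_ev[OF ev]) (use sg in \<open>simp add: summable_divide\<close>)
    have "e = (\<lambda>t. \<Sum>n<N. (lams 0 t w n - mu M F X t w n)^2)"
      unfolding e_def using good_muT[OF gd] by simp
    then show ?case using se by simp
  qed
qed

end


theorem theorem1:
  fixes M :: "'w measure" and F :: "nat \<Rightarrow> 'w measure"
    and X :: "nat \<Rightarrow> 'w \<Rightarrow> nat \<Rightarrow> real" and N :: nat and \<epsilon> :: real
  assumes "prob_space M"
    and "filtration_on M F"
    and "\<forall>t\<ge>1. \<forall>n<N. (\<lambda>w. X t w n) \<in> borel_measurable (F t)"
    and "\<forall>t\<ge>1. \<forall>w\<in>space M. X t w \<in> prob_simplex N"
    and "\<epsilon> > 0"
    and "\<forall>t. \<forall>n<N. AE w in M. \<epsilon> \<le> mu M F X t w n"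
  shows
    "(\<forall>nu lam. is_strategy M F N nu lam \<and> (\<forall>t. \<forall>w\<in>space M. \<forall>n<N. 0 < lam t w n) \<and>
        (AE w in M. summable (\<lambda>t. \<Sum>n<N. (lam t w n - mu M F X t w n)\<^sup>2))
        \<longrightarrow> survival M F N X nu lam)
   \<and> (\<forall>nu lam. is_strategy M F N nu lam \<and> (\<forall>t. \<forall>w\<in>space M. \<forall>n<N. 0 < lam t w n) \<and>
        (\<exists>c>0. \<forall>t. \<forall>w\<in>space M. c \<le> nu t w) \<and> survival M F N X nu lam
        \<longrightarrow> (AE w in M. summable (\<lambda>t. \<Sum>n<N. (lam t w n - mu M F X t w n)\<^sup>2)))
   \<and> (\<forall>Ma m nus lams W0. m < Ma \<and> admissible_profile M F N Ma nus lams \<and>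
        (\<forall>k<Ma. 0 < W0 k) \<and> (\<Sum>k<Ma. W0 k) = 1 \<and>
        survival M F N X (nus m) (lams m) \<and>
        (\<exists>c>0. \<forall>t. \<forall>w\<in>space M. c \<le> nus m t w \<and> (\<forall>n<N. c \<le> lams m t w n))
        \<longrightarrow> (AE w in M. summable (\<lambda>t. \<Sum>n<N.
               (lam_bar N Ma X nus lams W0 t w n - mu M F X t w n)\<^sup>2)))"
proof -
  interpret mkt M F X N \<epsilon> using assms unfolding mkt_def by auto
  have P1: "is_strategy M F N nu lam \<and> (\<forall>t. \<forall>w\<in>space M. \<forall>n<N. 0 < lam t w n) \<and>
        (AE w in M. summable (\<lambda>t. \<Sum>n<N. (lam t w n - mu M F X t w n)\<^sup>2))
        \<longrightarrow> survival M F N X nu lam" for nu lam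
  proof (intro impI)
    assume H: "is_strategy M F N nu lam \<and> (\<forall>t. \<forall>w\<in>space M. \<forall>n<N. 0 < lam t w n) \<and>
        (AE w in M. summable (\<lambda>t. \<Sum>n<N. (lam t w n - mu M F X t w n)\<^sup>2))"
    show "survival M F N X nu lam"
      unfolding survival_def
    proof (intro allI impI)
      fix Ma m :: nat and nus :: "nat \<Rightarrow> nat \<Rightarrow> 'w \<Rightarrow> real" and lams :: "nat \<Rightarrow> nat \<Rightarrow> 'w \<Rightarrow> nat \<Rightarrow> real" and W0 :: "nat \<Rightarrow> real"
      assume A: "m < Ma \<and> admissible_profile M F N Ma nus lams \<and> nus m = nu \<and> lams m = lam \<and>
        (\<forall>k<Ma. 0 < W0 k) \<and> (\<Sum>k<Ma. W0 k) = 1"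
      interpret prof M F X N \<epsilon> Ma nus lams W0
        using A by unfold_locales auto
      show "AE w in M. 0 < liminf (\<lambda>t. ereal (wealth N Ma X nus lams W0 t w m))"
      proof (rule part1_core)
        show "m < Ma" using A by blast
        have "lams m = lam" using A by blast
        then show "\<forall>t. \<forall>w\<in>space M. \<forall>n<N. 0 < lams m t w n"
          "AE w in M. summable (\<lambda>t. \<Sum>n<N. (lams m t w n - mu M F X t w n)\<^sup>2)"
          using H by simp_all
      qed
    qed
  qed
  have P2: "is_strategy M F N nu lam \<and> (\<forall>t. \<forall>w\<in>space M. \<forall>n<N. 0 < lam t w n) \<and>
        (\<exists>c>0. \<forall>t. \<forall>w\<in>space M. c \<le> nu t w) \<and> survival M F N X nu lam
        \<longrightarrow> (AE w in M. summable (\<lambda>t. \<Sum>n<N. (lam t w n - mu M F X t w n)\<^sup>2))" for nu lam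
  proof (intro impI)
    assume H: "is_strategy M F N nu lam \<and> (\<forall>t. \<forall>w\<in>space M. \<forall>n<N. 0 < lam t w n) \<and>
        (\<exists>c>0. \<forall>t. \<forall>w\<in>space M. c \<le> nu t w) \<and> survival M F N X nu lam"
    then obtain c where c: "0 < c" "\<forall>t. \<forall>w\<in>space M. c \<le> nu t w" by blast
    define nus2 :: "nat \<Rightarrow> nat \<Rightarrow> 'w \<Rightarrow> real" where "nus2 k = (if k = 0 then nu else (\<lambda>t w. 1))" for k
    define lams2 :: "nat \<Rightarrow> nat \<Rightarrow> 'w \<Rightarrow> nat \<Rightarrow> real" where "lams2 k = (if k = 0 then lam else muT)" for k
    define W02 :: "nat \<Rightarrow> real" where "W02 k = 1 / 2" for k
    have st1: "is_strategy M F N (\<lambda>t w. 1) muT"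
      unfolding is_strategy_def using muT_simplex by auto
    have adm: "admissible_profile M F N 2 nus2 lams2"
      unfolding admissible_profile_def
    proof (intro conjI)
      show "\<forall>m<2. is_strategy M F N (nus2 m) (lams2 m)"
      proof (intro allI impI)
        fix k :: nat assume "k < 2"
        then show "is_strategy M F N (nus2 k) (lams2 k)"
          using H st1 unfolding nus2_def lams2_def by (cases "k = 0") auto
      qed
      show "\<exists>m<2. \<forall>t. \<forall>w\<in>space M. 0 < nus2 m t w \<and> (\<forall>n<N. 0 < lams2 m t w n)"
        by (rule exI[of _ 1]) (auto simp: nus2_def lams2_def muT_pos)
    qed
    have W02p: "\<forall>k<2. 0 < W02 k" and W02s: "(\<Sum>k<2. W02 k) = 1" by (auto simp: W02_def)
    have surv0: "AE w in M. 0 < liminf (\<lambda>t. ereal (wealth N 2 X nus2 lams2 W02 t w 0))"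
    proof -
      have sv: "survival M F N X nu lam" using H by blast
      have "0 < (2::nat) \<and> admissible_profile M F N 2 nus2 lams2 \<and> nus2 0 = nu \<and> lams2 0 = lam \<and>
        (\<forall>k<2. 0 < W02 k) \<and> (\<Sum>k<2. W02 k) = 1"
        using adm W02p W02s by (simp add: nus2_def lams2_def)
      then show ?thesis using sv unfolding survival_def by blast
    qed
    interpret prof M F X N \<epsilon> 2 nus2 lams2 W02
      using adm W02p W02s by unfold_locales auto
    have "AE w in M. summable (\<lambda>t. \<Sum>n<N. (lams2 0 t w n - mu M F X t w n)\<^sup>2)"
      by (rule part2_core[OF refl _ _ _ c(1) _ surv0]) (use H c in \<open>auto simp: nus2_def lams2_def\<close>)
    then show "AE w in M. summable (\<lambda>t. \<Sum>n<N. (lam t w n - mu M F X t w n)\<^sup>2)"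
      by (simp add: lams2_def)
  qed
  have P3: "m < Ma \<and> admissible_profile M F N Ma nus lams \<and>
        (\<forall>k<Ma. 0 < W0 k) \<and> (\<Sum>k<Ma. W0 k) = 1 \<and>
        survival M F N X (nus m) (lams m) \<and>
        (\<exists>c>0. \<forall>t. \<forall>w\<in>space M. c \<le> nus m t w \<and> (\<forall>n<N. c \<le> lams m t w n))
        \<longrightarrow> (AE w in M. summable (\<lambda>t. \<Sum>n<N.
               (lam_bar N Ma X nus lams W0 t w n - mu M F X t w n)\<^sup>2))" for Ma m nus lams W0
  proof (intro impI)
    assume A: "m < Ma \<and> admissible_profile M F N Ma nus lams \<and>
        (\<forall>k<Ma. 0 < W0 k) \<and> (\<Sum>k<Ma. W0 k) = 1 \<and>
        survival M F N X (nus m) (lams m) \<and>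
        (\<exists>c>0. \<forall>t. \<forall>w\<in>space M. c \<le> nus m t w \<and> (\<forall>n<N. c \<le> lams m t w n))"
    then obtain c where c: "0 < c" "\<forall>t. \<forall>w\<in>space M. c \<le> nus m t w \<and> (\<forall>n<N. c \<le> lams m t w n)" by blast
    interpret prof M F X N \<epsilon> Ma nus lams W0
      using A by unfold_locales auto
    have m: "m < Ma" using A by simp
    have lp: "\<forall>t. \<forall>w\<in>space M. \<forall>n<N. 0 < lams m t w n" using c by (meson less_le_trans)
    have sm: "AE w in M. summable (\<lambda>t. \<Sum>n<N. (lams m t w n - mu M F X t w n)\<^sup>2)"
    proof -
      have ex: "\<exists>c>0. \<forall>t. \<forall>w\<in>space M. c \<le> nus m t w" using c by blast
      have sv: "survival M F N X (nus m) (lams m)" using A by simp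
      show ?thesis by (rule mp[OF P2[of "nus m" "lams m"]]) (intro conjI strat[OF m] lp ex sv)
    qed
    show "AE w in M. summable (\<lambda>t. \<Sum>n<N. (lam_bar N Ma X nus lams W0 t w n - mu M F X t w n)\<^sup>2)"
      by (rule part3_core[OF m c sm])
  qed
  show ?thesis
    apply (intro conjI allI)
      apply (rule P1)
     apply (rule P2)
    apply (rule P3)
    done
qed


end
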